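(* Let $(M,g,f,\mu)$ be an isotropic quasi-Einstein Lorentzian structure of dimension $4$ with $\mu\neq-\frac12$. If $\operatorname{div}W=0$ and $W(X,\nabla f,Z,\nabla f)=0$ for all vector fields $X,Z$, then $\operatorname{Ric}(\nabla f)=\lambda\nabla f$, $\tau=4\lambda$, $\Delta f=0$ and $\nabla\lambda=-\lambda\nabla f$.
   Context: Let $(M,g)$ be a pseudo-Riemannian manifold with Levi-Civita connection $\nabla$, Ricci tensor $\rho$, Ricci operator $\operatorname{Ric}$ ($g(\operatorname{Ric}X,Y)=\rho(X,Y)$), scalar curvature $\tau$, Hessian $\operatorname{Hes}_f=\nabla df$, Laplacian $\Delta f=\operatorname{tr}\operatorname{Hes}_f$. The structure $(M,g,f,\mu)$, with $f$ a smooth function and $\mu$ a real constant, is called quasi-Einstein (qE) if there is a smooth function $\lambda$ with $\operatorname{Hes}_f+\rho-\mu\, df\otimes df=\lambda g$. It is called isotropic if $\nabla f$ is nowhere zero and null: $g(\nabla f,\nabla f)=0$. Curvature convention: $R(X,Y)=\nabla_{[X,Y]}-[\nabla_X,\nabla_Y]$, $R(X,Y,Z,T)=g(R(X,Y)Z,T)$. In dimension 4 the Weyl tensor is $W(X,Y,Z,T)=R(X,Y,Z,T)+\frac{\tau}{6}\{g(X,Z)g(Y,T)-g(X,T)g(Y,Z)\}+\frac12\{\rho(X,T)g(Y,Z)-\rho(X,Z)g(Y,T)+\rho(Y,Z)g(X,T)-\rho(Y,T)g(X,Z)\}$, and $\operatorname{div}W(X,Y,Z)=-\frac12\{(\nabla_X\rho)(Y,Z)-(\nabla_Y\rho)(X,Z)\}+\frac1{12}\{X(\tau)g(Y,Z)-Y(\tau)g(X,Z)\}$.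 *)

theory Defs
  imports "HOL-Analysis.Analysis"
begin

text \<open>Local coordinate formalisation on an open set U of R^4 (a coordinate chart).
Indices range over the numeral type 4. A metric is a field of 4x4 matrices g x,
with g x $ i $ j = g(d_i, d_j).\<close>

type_synonym pt = "real^4"
type_synonym metric = "real^4 \<Rightarrow> real^4^4"

definition pd :: "4 \<Rightarrow> (pt \<Rightarrow> real) \<Rightarrow> pt \<Rightarrow> real" where
  "pd i h x = deriv (\<lambda>t. h (x + t *\<^sub>R axis i 1)) 0"

fun Ck_on :: "nat \<Rightarrow> pt set \<Rightarrow> (pt \<Rightarrow> real) \<Rightarrow> bool" where
  "Ck_on 0 U h = continuous_on U h"
| "Ck_on (Suc k) U h = (continuous_on U h \<and>
     (\<forall>i. \<forall>x\<in>U. (\<lambda>t. h (x + t *\<^sub>R axis i 1)) differentiable (at 0)) \<and>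
     (\<forall>i. Ck_on k U (pd i h)))"

definition smooth_on :: "pt set \<Rightarrow> (pt \<Rightarrow> real) \<Rightarrow> bool" where
  "smooth_on U h \<longleftrightarrow> (\<forall>k. Ck_on k U h)"

definition lorentz_diag :: "real^4^4" where
  "lorentz_diag = (\<chi> i j. if i = j then (if i = 0 then -1 else 1) else 0)"

definition lorentzian_mat :: "real^4^4 \<Rightarrow> bool" where
  "lorentzian_mat G \<longleftrightarrow> transpose G = G \<and>
     (\<exists>P::real^4^4. invertible P \<and> transpose P ** G ** P = lorentz_diag)"

definition lorentzian_metric_on :: "pt set \<Rightarrow> metric \<Rightarrow> bool" where
  "lorentzian_metric_on U g \<longleftrightarrow> open U \<and>
     (\<forall>i j. smooth_on U (\<lambda>x. g x $ i $ j)) \<and> (\<forall>x\<in>U. lorentzian_mat (g x))"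

definition ginv :: "metric \<Rightarrow> pt \<Rightarrow> 4 \<Rightarrow> 4 \<Rightarrow> real" where
  "ginv g x k l = matrix_inv (g x) $ k $ l"

definition Gam :: "metric \<Rightarrow> pt \<Rightarrow> 4 \<Rightarrow> 4 \<Rightarrow> 4 \<Rightarrow> real" where
  "Gam g x k i j = (1/2) * (\<Sum>l\<in>UNIV. ginv g x k l *
      (pd i (\<lambda>y. g y $ j $ l) x + pd j (\<lambda>y. g y $ i $ l) x - pd l (\<lambda>y. g y $ i $ j) x))"

text \<open>Component along d_l of (nabla_{d_i} nabla_{d_j} - nabla_{d_j} nabla_{d_i}) d_k
 (coordinate fields commute).\<close>
definition commR :: "metric \<Rightarrow> pt \<Rightarrow> 4 \<Rightarrow> 4 \<Rightarrow> 4 \<Rightarrow> 4 \<Rightarrow> real" where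
  "commR g x i j k l =
     pd i (\<lambda>y. Gam g y l j k) x - pd j (\<lambda>y. Gam g y l i k) x
     + (\<Sum>m\<in>UNIV. Gam g x l i m * Gam g x m j k - Gam g x l j m * Gam g x m i k)"

text \<open>Paper's convention R(X,Y) = nabla_[X,Y] - [nabla_X, nabla_Y]:
 component along d_l of R(d_i,d_j) d_k.\<close>
definition Rop :: "metric \<Rightarrow> pt \<Rightarrow> 4 \<Rightarrow> 4 \<Rightarrow> 4 \<Rightarrow> 4 \<Rightarrow> real" where
  "Rop g x i j k l = - commR g x i j k l"

definition Rm :: "metric \<Rightarrow> pt \<Rightarrow> 4 \<Rightarrow> 4 \<Rightarrow> 4 \<Rightarrow> 4 \<Rightarrow> real" where
  "Rm g x i j k t = (\<Sum>l\<in>UNIV. Rop g x i j k l * g x $ l $ t)"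

text \<open>Ricci tensor rho(X,Y) = tr(Z \<mapsto> R(X,Z)Y) (the usual Ricci tensor).\<close>
definition rho :: "metric \<Rightarrow> pt \<Rightarrow> 4 \<Rightarrow> 4 \<Rightarrow> real" where
  "rho g x i j = (\<Sum>k\<in>UNIV. Rop g x i k j k)"

definition scal :: "metric \<Rightarrow> pt \<Rightarrow> real" where
  "scal g x = (\<Sum>i\<in>UNIV. \<Sum>j\<in>UNIV. ginv g x i j * rho g x i j)"

definition RicOp :: "metric \<Rightarrow> pt \<Rightarrow> (4 \<Rightarrow> real) \<Rightarrow> 4 \<Rightarrow> real" where
  "RicOp g x X i = (\<Sum>j\<in>UNIV. ginv g x i j * (\<Sum>k\<in>UNIV. X k * rho g x k j))"

definition grad :: "metric \<Rightarrow> (pt \<Rightarrow> real) \<Rightarrow> pt \<Rightarrow> 4 \<Rightarrow> real" where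
  "grad g h x i = (\<Sum>j\<in>UNIV. ginv g x i j * pd j h x)"

definition gval :: "metric \<Rightarrow> pt \<Rightarrow> (4 \<Rightarrow> real) \<Rightarrow> (4 \<Rightarrow> real) \<Rightarrow> real" where
  "gval g x X Y = (\<Sum>i\<in>UNIV. \<Sum>j\<in>UNIV. g x $ i $ j * X i * Y j)"

definition Hes :: "metric \<Rightarrow> (pt \<Rightarrow> real) \<Rightarrow> pt \<Rightarrow> 4 \<Rightarrow> 4 \<Rightarrow> real" where
  "Hes g h x i j = pd i (pd j h) x - (\<Sum>k\<in>UNIV. Gam g x k i j * pd k h x)"

definition Lap :: "metric \<Rightarrow> (pt \<Rightarrow> real) \<Rightarrow> pt \<Rightarrow> real" where
  "Lap g h x = (\<Sum>i\<in>UNIV. \<Sum>j\<in>UNIV. ginv g x i j * Hes g h x i j)"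

definition nabla_rho :: "metric \<Rightarrow> pt \<Rightarrow> 4 \<Rightarrow> 4 \<Rightarrow> 4 \<Rightarrow> real" where
  "nabla_rho g x i j k = pd i (\<lambda>y. rho g y j k) x
     - (\<Sum>m\<in>UNIV. Gam g x m i j * rho g x m k + Gam g x m i k * rho g x j m)"

definition Weyl :: "metric \<Rightarrow> pt \<Rightarrow> 4 \<Rightarrow> 4 \<Rightarrow> 4 \<Rightarrow> 4 \<Rightarrow> real" where
  "Weyl g x i j k t = Rm g x i j k t
     + scal g x / 6 * (g x $ i $ k * g x $ j $ t - g x $ i $ t * g x $ j $ k)
     + 1/2 * (rho g x i t * g x $ j $ k - rho g x i k * g x $ j $ t
              + rho g x j k * g x $ i $ t - rho g x j t * g x $ i $ k)"

definition divW :: "metric \<Rightarrow> pt \<Rightarrow> 4 \<Rightarrow> 4 \<Rightarrow> 4 \<Rightarrow> real" where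
  "divW g x i j k = - 1/2 * (nabla_rho g x i j k - nabla_rho g x j i k)
     + 1/12 * (pd i (scal g) x * g x $ j $ k - pd j (scal g) x * g x $ i $ k)"

definition quasi_einstein_on :: "pt set \<Rightarrow> metric \<Rightarrow> (pt \<Rightarrow> real) \<Rightarrow> real \<Rightarrow> (pt \<Rightarrow> real) \<Rightarrow> bool" where
  "quasi_einstein_on U g f \<mu> lam \<longleftrightarrow> smooth_on U f \<and> smooth_on U lam \<and>
     (\<forall>x\<in>U. \<forall>i j. Hes g f x i j + rho g x i j - \<mu> * pd i f x * pd j f x = lam x * g x $ i $ j)"

definition isotropic_on :: "pt set \<Rightarrow> metric \<Rightarrow> (pt \<Rightarrow> real) \<Rightarrow> bool" where
  "isotropic_on U g f \<longleftrightarrow> (\<forall>x\<in>U. (\<exists>i. grad g f x i \<noteq> 0) \<and> gval g x (grad g f x) (grad g f x) = 0)"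

end

theory Submission
  imports Defs
begin


definition LD :: "(pt \<Rightarrow> real) \<Rightarrow> pt \<Rightarrow> 4 \<Rightarrow> bool" where
  "LD p x i \<longleftrightarrow> (\<lambda>t. p (x + t *\<^sub>R axis i 1)) differentiable (at 0)"

lemma LD_D: "LD p x i \<Longrightarrow> ((\<lambda>t. p (x + t *\<^sub>R axis i 1)) has_real_derivative pd i p x) (at 0)"
  unfolding LD_def pd_def by (simp add: DERIV_deriv_iff_real_differentiable)

lemma pd_eqI: "((\<lambda>t. p (x + t *\<^sub>R axis i 1)) has_real_derivative D) (at 0) \<Longrightarrow> pd i p x = D"
  unfolding pd_def by (rule DERIV_imp_deriv)

lemma LD_I: "((\<lambda>t. p (x + t *\<^sub>R axis i 1)) has_real_derivative D) (at 0) \<Longrightarrow> LD p x i"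
  unfolding LD_def using real_differentiable_def by blast

lemma ev_line: 
  fixes x v :: pt
  assumes "open U" "x \<in> U"
  shows "eventually (\<lambda>t. x + t *\<^sub>R v \<in> U) (nhds (0::real))"
proof -
  have "open ((\<lambda>t::real. x + t *\<^sub>R v) -` U)"
    by (rule continuous_open_vimage) (fact, intro allI continuous_intros)
  then show ?thesis unfolding eventually_nhds using assms(2) by (intro exI[of _ "(\<lambda>t::real. x + t *\<^sub>R v) -` U"]) auto
qed

lemma pd_local:
  assumes "open U" "x \<in> U" "\<And>y. y \<in> U \<Longrightarrow> p y = q y"
  shows "pd i p x = pd i q x"
  unfolding pd_def
  by (rule deriv_cong_ev[OF _ refl]) (use eventually_mono[OF ev_line[OF assms(1,2), of "axis i 1"]] assms(3) in auto)

lemma LD_local: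
  assumes "open U" "x \<in> U" "\<And>y. y \<in> U \<Longrightarrow> p y = q y" "LD p x i"
  shows "LD q x i"
proof -
  have "((\<lambda>t. q (x + t *\<^sub>R axis i 1)) has_real_derivative pd i p x) (at 0)"
    using LD_D[OF assms(4)]
    by (rule DERIV_cong_ev[THEN iffD1, rotated 3])
       (use eventually_mono[OF ev_line[OF assms(1,2), of "axis i 1"]] assms(3) in auto)
  then show ?thesis by (rule LD_I)
qed

lemma smooth_pd: "smooth_on U h \<Longrightarrow> smooth_on U (pd i h)"
  unfolding smooth_on_def
proof
  fix k assume "\<forall>k. Ck_on k U h"
  then have "Ck_on (Suc k) U h" by blast
  then show "Ck_on k U (pd i h)" by simp
qed

lemma smooth_LD: "smooth_on U h \<Longrightarrow> x \<in> U \<Longrightarrow> LD h x i"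
  unfolding smooth_on_def LD_def
  by (metis Ck_on.simps(2))

lemma smooth_cont: "smooth_on U h \<Longrightarrow> continuous_on U h"
  unfolding smooth_on_def by (metis Ck_on.simps(1))

lemma line_deriv_at:
  assumes "LD h (z + s0 *\<^sub>R axis i 1) i"
  shows "((\<lambda>s. h (z + s *\<^sub>R axis i 1)) has_real_derivative pd i h (z + s0 *\<^sub>R axis i 1)) (at s0)"
proof -
  have "((\<lambda>r. h ((z + s0 *\<^sub>R axis i 1) + r *\<^sub>R axis i 1)) has_real_derivative pd i h (z + s0 *\<^sub>R axis i 1)) (at 0)"
    using LD_D[OF assms] .
  moreover have "(\<lambda>r. h ((z + s0 *\<^sub>R axis i 1) + r *\<^sub>R axis i 1)) = (\<lambda>r. (\<lambda>s. h (z + s *\<^sub>R axis i 1)) (r + s0))"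
    by (simp add: algebra_simps)
  ultimately show ?thesis using DERIV_shift[of "\<lambda>s. h (z + s *\<^sub>R axis i 1)" _ 0 s0] by simp
qed

lemma mvt_box:
  fixes x :: pt
  assumes sm: "smooth_on U h" and s: "0 < s"
    and box: "\<And>\<sigma> \<tau>. 0 \<le> \<sigma> \<Longrightarrow> \<sigma> \<le> s \<Longrightarrow> 0 \<le> \<tau> \<Longrightarrow> \<tau> \<le> s \<Longrightarrow> x + \<sigma> *\<^sub>R axis i 1 + \<tau> *\<^sub>R axis j 1 \<in> U"
  shows "\<exists>\<sigma> \<theta>. 0 < \<sigma> \<and> \<sigma> < s \<and> 0 < \<theta> \<and> \<theta> < s \<and>
     h (x + s *\<^sub>R axis i 1 + s *\<^sub>R axis j 1) - h (x + s *\<^sub>R axis i 1) - h (x + s *\<^sub>R axis j 1) + h x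
       = s * s * pd j (pd i h) (x + \<sigma> *\<^sub>R axis i 1 + \<theta> *\<^sub>R axis j 1)"
proof -
  define e where "e = (axis i 1 :: pt)"
  define d where "d = (axis j 1 :: pt)"
  define u where "u = (\<lambda>\<sigma>. h (x + \<sigma> *\<^sub>R e + s *\<^sub>R d) - h (x + \<sigma> *\<^sub>R e))"
  define u' where "u' = (\<lambda>\<sigma>. pd i h (x + \<sigma> *\<^sub>R e + s *\<^sub>R d) - pd i h (x + \<sigma> *\<^sub>R e))"
  have du: "(u has_real_derivative u' \<sigma>) (at \<sigma>)" if "0 \<le> \<sigma>" "\<sigma> \<le> s" for \<sigma>
  proof -
    have p1: "x + \<sigma> *\<^sub>R e + s *\<^sub>R d \<in> U" using box[of \<sigma> s] that s unfolding e_def d_def by auto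
    have p2: "x + \<sigma> *\<^sub>R e \<in> U" using box[of \<sigma> 0] that s unfolding e_def d_def by auto
    have eq1: "x + \<sigma> *\<^sub>R e + s *\<^sub>R d = (x + s *\<^sub>R d) + \<sigma> *\<^sub>R e" by (simp add: algebra_simps)
    have D1: "((\<lambda>r. h ((x + s *\<^sub>R d) + r *\<^sub>R e)) has_real_derivative pd i h ((x + s *\<^sub>R d) + \<sigma> *\<^sub>R e)) (at \<sigma>)"
      unfolding e_def by (rule line_deriv_at, rule smooth_LD[OF sm]) (use p1 in \<open>simp add: e_def algebra_simps\<close>)
    have D2: "((\<lambda>r. h (x + r *\<^sub>R e)) has_real_derivative pd i h (x + \<sigma> *\<^sub>R e)) (at \<sigma>)"
      unfolding e_def by (rule line_deriv_at, rule smooth_LD[OF sm]) (use p2 in \<open>simp add: e_def\<close>)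
    have "u = (\<lambda>r. h ((x + s *\<^sub>R d) + r *\<^sub>R e) - h (x + r *\<^sub>R e))"
      unfolding u_def by (simp add: algebra_simps)
    then show ?thesis unfolding u'_def using DERIV_diff[OF D1 D2] by (simp add: eq1)
  qed
  obtain \<sigma> where \<sigma>: "0 < \<sigma>" "\<sigma> < s" "u s - u 0 = (s - 0) * u' \<sigma>"
    using MVT2[OF s, of u u'] du by auto
  define v where "v = (\<lambda>\<tau>. pd i h (x + \<sigma> *\<^sub>R e + \<tau> *\<^sub>R d))"
  have dv: "(v has_real_derivative pd j (pd i h) (x + \<sigma> *\<^sub>R e + \<tau> *\<^sub>R d)) (at \<tau>)" if "0 \<le> \<tau>" "\<tau> \<le> s" for \<tau>
  proof -
    have p1: "x + \<sigma> *\<^sub>R e + \<tau> *\<^sub>R d \<in> U" using box[of \<sigma> \<tau>] that \<sigma> unfolding e_def d_def by auto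
    show ?thesis unfolding v_def d_def
      by (rule line_deriv_at, rule smooth_LD[OF smooth_pd[OF sm]]) (use p1 in \<open>simp add: d_def\<close>)
  qed
  obtain \<theta> where \<theta>: "0 < \<theta>" "\<theta> < s" "v s - v 0 = (s - 0) * pd j (pd i h) (x + \<sigma> *\<^sub>R e + \<theta> *\<^sub>R d)"
    using MVT2[OF s, of v "\<lambda>\<tau>. pd j (pd i h) (x + \<sigma> *\<^sub>R e + \<tau> *\<^sub>R d)"] dv by auto
  have "u' \<sigma> = v s - v 0" unfolding u'_def v_def by simp
  then have "u s - u 0 = s * s * pd j (pd i h) (x + \<sigma> *\<^sub>R e + \<theta> *\<^sub>R d)" using \<sigma>(3) \<theta>(3) by simp
  then show ?thesis using \<sigma> \<theta> unfolding u_def e_def d_def by (intro exI[of _ \<sigma>] exI[of _ \<theta>]) (simp add: algebra_simps)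
qed

lemma norm_box:
  fixes \<sigma> \<tau> :: real
  assumes "0 \<le> \<sigma>" "\<sigma> \<le> s" "0 \<le> \<tau>" "\<tau> \<le> s"
  shows "norm (\<sigma> *\<^sub>R (axis i 1::pt) + \<tau> *\<^sub>R axis j 1) \<le> 2 * s"
proof -
  have "norm (\<sigma> *\<^sub>R (axis i 1::pt) + \<tau> *\<^sub>R axis j 1) \<le> norm (\<sigma> *\<^sub>R (axis i 1::pt)) + norm (\<tau> *\<^sub>R (axis j 1::pt))"
    by (rule norm_triangle_ineq)
  also have "\<dots> = \<sigma> + \<tau>" using assms by (simp add: norm_axis_1)
  finally show ?thesis using assms by simp
qed

lemma schwarz:
  assumes U: "open U" and sm: "smooth_on U h" and x: "x \<in> U"
  shows "pd i (pd j h) x = pd j (pd i h) x"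
proof (rule ccontr)
  define D1 where "D1 = pd j (pd i h)"
  define D2 where "D2 = pd i (pd j h)"
  assume ne: "pd i (pd j h) x \<noteq> pd j (pd i h) x"
  define \<epsilon> where "\<epsilon> = \<bar>D1 x - D2 x\<bar> / 2"
  have \<epsilon>: "\<epsilon> > 0" using ne unfolding \<epsilon>_def D1_def D2_def by simp
  have c1: "isCont D1 x" unfolding D1_def
    using smooth_cont[OF smooth_pd[OF smooth_pd[OF sm]]] U x continuous_on_eq_continuous_at by blast
  have c2: "isCont D2 x" unfolding D2_def
    using smooth_cont[OF smooth_pd[OF smooth_pd[OF sm]]] U x continuous_on_eq_continuous_at by blast
  obtain \<delta>1 where \<delta>1: "\<delta>1 > 0" "\<And>y. dist y x < \<delta>1 \<Longrightarrow> dist (D1 y) (D1 x) < \<epsilon>"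
    using c1 \<epsilon> unfolding continuous_at_eps_delta by blast
  obtain \<delta>2 where \<delta>2: "\<delta>2 > 0" "\<And>y. dist y x < \<delta>2 \<Longrightarrow> dist (D2 y) (D2 x) < \<epsilon>"
    using c2 \<epsilon> unfolding continuous_at_eps_delta by blast
  obtain r where r: "r > 0" "ball x r \<subseteq> U" using U x open_contains_ball by blast
  define s where "s = min r (min \<delta>1 \<delta>2) / 3"
  have s: "s > 0" "2 * s < r" "2 * s < \<delta>1" "2 * s < \<delta>2" using r \<delta>1 \<delta>2 unfolding s_def by auto
  have box: "x + \<sigma> *\<^sub>R axis a 1 + \<tau> *\<^sub>R axis b 1 \<in> U"
    if "0 \<le> \<sigma>" "\<sigma> \<le> s" "0 \<le> \<tau>" "\<tau> \<le> s" for \<sigma> \<tau> a b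
  proof -
    have "norm (\<sigma> *\<^sub>R (axis a 1::pt) + \<tau> *\<^sub>R axis b 1) \<le> 2 * s" using norm_box that by blast
    moreover have "dist x (x + (\<sigma> *\<^sub>R axis a 1 + \<tau> *\<^sub>R axis b 1)) = norm (\<sigma> *\<^sub>R (axis a 1::pt) + \<tau> *\<^sub>R axis b 1)"
      by (metis add_diff_cancel_left' dist_commute dist_norm)
    ultimately have "dist x (x + \<sigma> *\<^sub>R axis a 1 + \<tau> *\<^sub>R axis b 1) < r" using s by (simp add: add.assoc)
    then show ?thesis using r by auto
  qed
  obtain \<sigma> \<theta> where A: "0 < \<sigma>" "\<sigma> < s" "0 < \<theta>" "\<theta> < s"
    "h (x + s *\<^sub>R axis i 1 + s *\<^sub>R axis j 1) - h (x + s *\<^sub>R axis i 1) - h (x + s *\<^sub>R axis j 1) + h x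
       = s * s * D1 (x + \<sigma> *\<^sub>R axis i 1 + \<theta> *\<^sub>R axis j 1)"
    using mvt_box[OF sm s(1), of x i j] box unfolding D1_def by blast
  obtain \<sigma>' \<theta>' where B: "0 < \<sigma>'" "\<sigma>' < s" "0 < \<theta>'" "\<theta>' < s"
    "h (x + s *\<^sub>R axis j 1 + s *\<^sub>R axis i 1) - h (x + s *\<^sub>R axis j 1) - h (x + s *\<^sub>R axis i 1) + h x
       = s * s * D2 (x + \<sigma>' *\<^sub>R axis j 1 + \<theta>' *\<^sub>R axis i 1)"
    using mvt_box[OF sm s(1), of x j i] box unfolding D2_def by blast
  have comm: "x + s *\<^sub>R axis j 1 + s *\<^sub>R axis i 1 = x + s *\<^sub>R axis i 1 + s *\<^sub>R axis j 1" by (simp add: algebra_simps)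
  have "s * s * D1 (x + \<sigma> *\<^sub>R axis i 1 + \<theta> *\<^sub>R axis j 1) = s * s * D2 (x + \<sigma>' *\<^sub>R axis j 1 + \<theta>' *\<^sub>R axis i 1)"
    using A(5) B(5)[unfolded comm] by linarith
  then have eq: "D1 (x + \<sigma> *\<^sub>R axis i 1 + \<theta> *\<^sub>R axis j 1) = D2 (x + \<sigma>' *\<^sub>R axis j 1 + \<theta>' *\<^sub>R axis i 1)"
    using s(1) by simp
  have n1: "norm (\<sigma> *\<^sub>R (axis i 1::pt) + \<theta> *\<^sub>R axis j 1) \<le> 2 * s" using norm_box A by simp
  have n2: "norm (\<sigma>' *\<^sub>R (axis j 1::pt) + \<theta>' *\<^sub>R axis i 1) \<le> 2 * s" using norm_box B by simp
  have d1: "dist (D1 (x + \<sigma> *\<^sub>R axis i 1 + \<theta> *\<^sub>R axis j 1)) (D1 x) < \<epsilon>"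
    by (rule \<delta>1(2)) (use n1 s in \<open>simp add: dist_norm add.assoc\<close>)
  have d2: "dist (D2 (x + \<sigma>' *\<^sub>R axis j 1 + \<theta>' *\<^sub>R axis i 1)) (D2 x) < \<epsilon>"
    by (rule \<delta>2(2)) (use n2 s in \<open>simp add: dist_norm add.assoc\<close>)
  show False using d1 d2 eq unfolding \<epsilon>_def dist_real_def by (simp add: abs_if split: if_splits)
qed


lemma det_lorentz_diag: "det lorentz_diag \<noteq> 0"
proof -
  have "det lorentz_diag = (\<Prod>i\<in>UNIV. lorentz_diag $ i $ i)"
    by (rule det_diagonal) (simp add: lorentz_diag_def)
  moreover have "(\<Prod>i\<in>(UNIV::4 set). lorentz_diag $ i $ i) \<noteq> 0"
    unfolding lorentz_diag_def by (subst prod_zero_iff) auto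
  ultimately show ?thesis by simp
qed

lemma lor_det: "lorentzian_mat G \<Longrightarrow> det G \<noteq> 0"
  unfolding lorentzian_mat_def
  using det_lorentz_diag by (metis det_mul mult_zero_left mult_zero_right det_transpose)

lemma inv_props:
  fixes A :: "real^4^4"
  assumes "det A \<noteq> 0"
  shows "A ** matrix_inv A = mat 1" "matrix_inv A ** A = mat 1"
proof -
  have "invertible A" using assms invertible_det_nz by blast
  then have "\<exists>A'. A ** A' = mat 1 \<and> A' ** A = mat 1" unfolding invertible_def by blast
  then have "A ** matrix_inv A = mat 1 \<and> matrix_inv A ** A = mat 1"
    unfolding matrix_inv_def by (rule someI_ex)
  then show "A ** matrix_inv A = mat 1" "matrix_inv A ** A = mat 1" by auto
qed

lemma inv_cramer:
  fixes A :: "real^4^4"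
  assumes d: "det A \<noteq> 0"
  shows "matrix_inv A $ k $ l = det (\<chi> a b. if b = k then axis l 1 $ a else A $ a $ b) / det A"
proof -
  define c where "c = (\<chi> k. matrix_inv A $ k $ l)"
  have "A *v c = axis l 1"
  proof -
    have "(A *v c) $ a = (A ** matrix_inv A) $ a $ l" for a
      by (simp add: c_def matrix_vector_mult_def matrix_matrix_mult_def)
    then show ?thesis using inv_props(1)[OF d] by (simp add: vec_eq_iff mat_def axis_def)
  qed
  then have "c = (\<chi> k. det(\<chi> i j. if j=k then axis l 1 $i else A$i$j) / det A)"
    using cramer[OF d] by blast
  then have "c $ k = det(\<chi> i j. if j=k then axis l 1 $i else A$i$j) / det A" by simp
  then show ?thesis unfolding c_def by simp
qed

lemma differentiable_prod:
  fixes f :: "'i \<Rightarrow> real \<Rightarrow> real"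
  assumes "finite S" "\<And>a. a \<in> S \<Longrightarrow> f a differentiable (at t)"
  shows "(\<lambda>x. \<Prod>a\<in>S. f a x) differentiable (at t)"
  using assms
proof (induction S rule: finite_induct)
  case empty then show ?case by simp
next
  case (insert a S)
  then show ?case by (simp add: differentiable_mult)
qed

lemma det_differentiable:
  fixes M :: "real \<Rightarrow> real^4^4"
  assumes "\<And>a b. (\<lambda>t. M t $ a $ b) differentiable (at t0)"
  shows "(\<lambda>t. det (M t)) differentiable (at t0)"
  unfolding det_def
proof (rule differentiable_sum)
  show "finite {p. p permutes (UNIV::4 set)}" by simp
  show "\<forall>p\<in>{p. p permutes UNIV}. (\<lambda>t. real_of_int (sign p) * (\<Prod>i\<in>UNIV. M t $ i $ p i)) differentiable at t0"
  proof
    fix p :: "4 \<Rightarrow> 4"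
    have "(\<lambda>t. (\<Prod>i\<in>UNIV. M t $ i $ p i)) differentiable at t0"
      by (rule differentiable_prod) (auto intro: assms)
    then show "(\<lambda>t. real_of_int (sign p) * (\<Prod>i\<in>UNIV. M t $ i $ p i)) differentiable at t0"
      by (rule differentiable_mult[OF differentiable_const])
  qed
qed


lemma lm_open: "lorentzian_metric_on U g \<Longrightarrow> open U"
  unfolding lorentzian_metric_on_def by blast
lemma lm_smooth: "lorentzian_metric_on U g \<Longrightarrow> smooth_on U (\<lambda>x. g x $ i $ j)"
  unfolding lorentzian_metric_on_def by blast
lemma lm_det: "lorentzian_metric_on U g \<Longrightarrow> x \<in> U \<Longrightarrow> det (g x) \<noteq> 0"
  unfolding lorentzian_metric_on_def using lor_det by blast
lemma lm_sym: "lorentzian_metric_on U g \<Longrightarrow> x \<in> U \<Longrightarrow> g x $ i $ j = g x $ j $ i"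
proof -
  assume "lorentzian_metric_on U g" "x \<in> U"
  then have "transpose (g x) = g x" unfolding lorentzian_metric_on_def lorentzian_mat_def by blast
  then have "transpose (g x) $ i $ j = g x $ i $ j" by simp
  then show ?thesis by (simp add: transpose_def)
qed

lemma ginv_LD:
  assumes lm: "lorentzian_metric_on U g" and x: "x \<in> U"
  shows "LD (\<lambda>y. ginv g y k l) x i"
proof -
  define C where "C y = det (\<chi> a b. if b = k then axis l 1 $ a else g y $ a $ b) / det (g y)" for y
  have eq: "C y = ginv g y k l" if "y \<in> U" for y
    unfolding C_def ginv_def using inv_cramer[OF lm_det[OF lm that]] by simp
  have ent: "(\<lambda>t. g (x + t *\<^sub>R axis i 1) $ a $ b) differentiable (at 0)" for a b
    using smooth_LD[OF lm_smooth[OF lm] x] unfolding LD_def by blast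
  have "(\<lambda>t. C (x + t *\<^sub>R axis i 1)) differentiable (at 0)"
    unfolding C_def
  proof (rule differentiable_divide)
    show "(\<lambda>t. det (\<chi> a b. if b = k then axis l 1 $ a else g (x + t *\<^sub>R axis i 1) $ a $ b)) differentiable at 0"
      by (rule det_differentiable) (case_tac "b = k", simp_all add: ent)
    show "(\<lambda>t. det (g (x + t *\<^sub>R axis i 1))) differentiable at 0"
      by (rule det_differentiable) (rule ent)
    show "det (g (x + 0 *\<^sub>R axis i 1)) \<noteq> 0" using lm_det[OF lm x] by simp
  qed
  then have LC: "LD C x i" unfolding LD_def .
  show ?thesis by (rule LD_local[OF lm_open[OF lm] x _ LC]) (rule eq)
qed


lemma LD_pd_D: "LD p x i \<Longrightarrow> ((\<lambda>t. p (x + t *\<^sub>R axis i 1)) has_real_derivative pd i p x) (at 0)"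
  by (rule LD_D)

lemma pd_add: "LD p x i \<Longrightarrow> LD q x i \<Longrightarrow> pd i (\<lambda>y. p y + q y) x = pd i p x + pd i q x"
  by (rule pd_eqI, intro DERIV_add LD_D)
lemma LD_add: "LD p x i \<Longrightarrow> LD q x i \<Longrightarrow> LD (\<lambda>y. p y + q y) x i"
  by (rule LD_I, rule DERIV_add, (rule LD_D, assumption)+)
lemma pd_diff: "LD p x i \<Longrightarrow> LD q x i \<Longrightarrow> pd i (\<lambda>y. p y - q y) x = pd i p x - pd i q x"
  by (rule pd_eqI, intro DERIV_diff LD_D)
lemma LD_diff: "LD p x i \<Longrightarrow> LD q x i \<Longrightarrow> LD (\<lambda>y. p y - q y) x i"
  by (rule LD_I, rule DERIV_diff, (rule LD_D, assumption)+)
lemma pd_mult: "LD p x i \<Longrightarrow> LD q x i \<Longrightarrow> pd i (\<lambda>y. p y * q y) x = pd i p x * q x + p x * pd i q x"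
proof (rule pd_eqI)
  assume "LD p x i" "LD q x i"
  from DERIV_mult[OF LD_D[OF this(1)] LD_D[OF this(2)]]
  show "((\<lambda>t. p (x + t *\<^sub>R axis i 1) * q (x + t *\<^sub>R axis i 1)) has_real_derivative pd i p x * q x + p x * pd i q x) (at 0)"
    by (simp add: ac_simps)
qed
lemma LD_mult: "LD p x i \<Longrightarrow> LD q x i \<Longrightarrow> LD (\<lambda>y. p y * q y) x i"
  by (rule LD_I, rule DERIV_mult, (rule LD_D, assumption)+)
lemma pd_const: "pd i (\<lambda>y. c) x = 0"
  by (rule pd_eqI) simp
lemma LD_const: "LD (\<lambda>y. c) x i"
  by (rule LD_I[of _ _ _ 0]) simp
lemma pd_cmult: "LD p x i \<Longrightarrow> pd i (\<lambda>y. c * p y) x = c * pd i p x"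
  using pd_mult[OF LD_const] by (simp add: pd_const)
lemma LD_cmult: "LD p x i \<Longrightarrow> LD (\<lambda>y. c * p y) x i"
  using LD_mult[OF LD_const] by blast
lemma pd_sum: "(\<And>a. a \<in> S \<Longrightarrow> LD (p a) x i) \<Longrightarrow> pd i (\<lambda>y. \<Sum>a\<in>S. p a y) x = (\<Sum>a\<in>S. pd i (p a) x)"
  by (rule pd_eqI, rule DERIV_sum, rule LD_D, blast)
lemma LD_sum: "(\<And>a. a \<in> S \<Longrightarrow> LD (p a) x i) \<Longrightarrow> LD (\<lambda>y. \<Sum>a\<in>S. p a y) x i"
  by (rule LD_I, rule DERIV_sum, rule LD_D, blast)

locale setting =
  fixes U g f mu lam
  assumes lm: "lorentzian_metric_on U g" and qe: "quasi_einstein_on U g f mu lam"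
begin

lemma opn: "open U" using lm_open[OF lm] .
lemma fsm: "smooth_on U f" using qe unfolding quasi_einstein_on_def by blast
lemma lsm: "smooth_on U lam" using qe unfolding quasi_einstein_on_def by blast
lemma qe_eq: "x \<in> U \<Longrightarrow> Hes g f x i j + rho g x i j - mu * pd i f x * pd j f x = lam x * g x $ i $ j"
  using qe unfolding quasi_einstein_on_def by blast

lemma LDg: "x \<in> U \<Longrightarrow> LD (\<lambda>y. g y $ a $ b) x i" using smooth_LD[OF lm_smooth[OF lm]] by blast
lemma LDdg: "x \<in> U \<Longrightarrow> LD (pd k (\<lambda>y. g y $ a $ b)) x i" using smooth_LD[OF smooth_pd[OF lm_smooth[OF lm]]] by blast
lemma LDh: "x \<in> U \<Longrightarrow> LD (\<lambda>y. ginv g y k l) x i" using ginv_LD[OF lm] by blast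
lemma LDf: "x \<in> U \<Longrightarrow> LD f x i" using smooth_LD[OF fsm] by blast
lemma LDf1: "x \<in> U \<Longrightarrow> LD (pd k f) x i" using smooth_LD[OF smooth_pd[OF fsm]] by blast
lemma LDf2: "x \<in> U \<Longrightarrow> LD (pd j (pd k f)) x i" using smooth_LD[OF smooth_pd[OF smooth_pd[OF fsm]]] by blast
lemma LDlam: "x \<in> U \<Longrightarrow> LD lam x i" using smooth_LD[OF lsm] by blast

lemma LDGam: "x \<in> U \<Longrightarrow> LD (\<lambda>y. Gam g y k a b) x i"
  unfolding Gam_def
  by (intro LD_cmult LD_sum LD_mult LD_add LD_diff LDh LDdg)

end


lemma sum_contract: "(\<Sum>p\<in>(UNIV::4 set). a p * (\<Sum>q\<in>(UNIV::4 set). b p q * X q)) = (\<Sum>q\<in>UNIV. (\<Sum>p\<in>UNIV. a p * b p q) * (X q::real))"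
proof -
  have "(\<Sum>p\<in>(UNIV::4 set). a p * (\<Sum>q\<in>(UNIV::4 set). b p q * X q)) = (\<Sum>p\<in>UNIV. \<Sum>q\<in>UNIV. a p * b p q * X q)"
    by (simp add: sum_distrib_left mult.assoc)
  also have "\<dots> = (\<Sum>q\<in>UNIV. \<Sum>p\<in>UNIV. a p * b p q * X q)" by (rule sum.swap)
  also have "\<dots> = (\<Sum>q\<in>UNIV. (\<Sum>p\<in>UNIV. a p * b p q) * (X q::real))" by (simp add: sum_distrib_right)
  finally show ?thesis .
qed

lemma sum_delta4: "(\<Sum>q\<in>(UNIV::4 set). (if k = q then 1 else 0) * X q) = (X k :: real)"
proof -
  have "\<And>q. (if k = q then 1 else 0) * X q = (if k = q then X q else 0)" by simp
  then show ?thesis by simp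
qed
lemma sum_delta4': "(\<Sum>q\<in>(UNIV::4 set). (if q = k then 1 else 0) * X q) = (X k :: real)"
proof -
  have "\<And>q. (if q = k then 1 else 0) * X q = (if q = k then X q else 0)" by simp
  then show ?thesis by simp
qed

context setting begin

lemma gh: "x \<in> U \<Longrightarrow> (\<Sum>j\<in>UNIV. g x $ i $ j * ginv g x j k) = (if i = k then 1 else 0)"
proof -
  assume x: "x \<in> U"
  have "(g x ** matrix_inv (g x)) $ i $ k = mat 1 $ i $ k" using inv_props(1)[OF lm_det[OF lm x]] by simp
  then show ?thesis by (simp add: matrix_matrix_mult_def mat_def ginv_def)
qed

lemma hg: "x \<in> U \<Longrightarrow> (\<Sum>j\<in>UNIV. ginv g x i j * g x $ j $ k) = (if i = k then 1 else 0)"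
proof -
  assume x: "x \<in> U"
  have "(matrix_inv (g x) ** g x) $ i $ k = mat 1 $ i $ k" using inv_props(2)[OF lm_det[OF lm x]] by simp
  then show ?thesis by (simp add: matrix_matrix_mult_def mat_def ginv_def)
qed

lemma hsym: "x \<in> U \<Longrightarrow> ginv g x k l = ginv g x l k"
proof -
  assume x: "x \<in> U"
  define G where "G = g x"
  define h where "h = matrix_inv G"
  have tG: "transpose G = G"
    using lm x unfolding lorentzian_metric_on_def lorentzian_mat_def G_def by blast
  have gh: "G ** h = mat 1" "h ** G = mat 1" using inv_props[OF lm_det[OF lm x]] unfolding G_def h_def by auto
  have "transpose h ** G = mat 1"
    by (metis gh(1) matrix_transpose_mul tG transpose_mat)
  then have "transpose h = h"
    by (metis gh(1) matrix_mul_assoc matrix_mul_lid matrix_mul_rid)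
  then have "transpose h $ l $ k = h $ l $ k" by simp
  then show ?thesis unfolding ginv_def h_def G_def by (simp add: transpose_def)
qed

lemma dG_sym: "x \<in> U \<Longrightarrow> pd a (\<lambda>y. g y $ j $ k) x = pd a (\<lambda>y. g y $ k $ j) x"
  by (rule pd_local[OF opn]) (auto intro: lm_sym[OF lm])

lemma d2G_sym2: "x \<in> U \<Longrightarrow> pd a (pd b (\<lambda>y. g y $ j $ k)) x = pd a (pd b (\<lambda>y. g y $ k $ j)) x"
  by (rule pd_local[OF opn]) (auto intro: dG_sym)

lemma d2G_sym1: "x \<in> U \<Longrightarrow> pd a (pd b (\<lambda>y. g y $ j $ k)) x = pd b (pd a (\<lambda>y. g y $ j $ k)) x"
  by (rule schwarz[OF opn lm_smooth[OF lm]])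

lemma f2_sym: "x \<in> U \<Longrightarrow> pd a (pd b f) x = pd b (pd a f) x"
  by (rule schwarz[OF opn fsm])

lemma f3_sym: "x \<in> U \<Longrightarrow> pd a (pd b (pd c f)) x = pd b (pd a (pd c f)) x"
  by (rule schwarz[OF opn smooth_pd[OF fsm]])

lemma Gam_sym: "x \<in> U \<Longrightarrow> Gam g x k i j = Gam g x k j i"
  unfolding Gam_def by (simp add: dG_sym[of x _ i j] add.commute)

lemma Gam_low: "x \<in> U \<Longrightarrow> (\<Sum>m\<in>UNIV. g x $ k $ m * Gam g x m i j) =
   1/2 * (pd i (\<lambda>y. g y $ j $ k) x + pd j (\<lambda>y. g y $ i $ k) x - pd k (\<lambda>y. g y $ i $ j) x)"
proof -
  assume x: "x \<in> U"
  have "(\<Sum>m\<in>UNIV. g x $ k $ m * Gam g x m i j) = 1/2 * (\<Sum>m\<in>UNIV. g x $ k $ m * (\<Sum>l\<in>UNIV. ginv g x m l *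
      (pd i (\<lambda>y. g y $ j $ l) x + pd j (\<lambda>y. g y $ i $ l) x - pd l (\<lambda>y. g y $ i $ j) x)))"
    unfolding Gam_def by (simp add: sum_distrib_left algebra_simps)
  also have "\<dots> = 1/2 * (\<Sum>l\<in>UNIV. (\<Sum>m\<in>UNIV. g x $ k $ m * ginv g x m l) *
      (pd i (\<lambda>y. g y $ j $ l) x + pd j (\<lambda>y. g y $ i $ l) x - pd l (\<lambda>y. g y $ i $ j) x))"
    by (subst sum_contract) simp
  also have "\<dots> = 1/2 * (pd i (\<lambda>y. g y $ j $ k) x + pd j (\<lambda>y. g y $ i $ k) x - pd k (\<lambda>y. g y $ i $ j) x)"
    by (simp add: gh[OF x] sum_delta4)
  finally show ?thesis .
qed

end


context setting begin

lemma LDHes: "x \<in> U \<Longrightarrow> LD (\<lambda>y. Hes g f y j k) x a"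
  unfolding Hes_def by (intro LD_diff LD_sum LD_mult LDGam LDf1 LDf2)

lemma dh: "x \<in> U \<Longrightarrow> pd a (\<lambda>y. ginv g y k l) x =
   - (\<Sum>p\<in>UNIV. \<Sum>q\<in>UNIV. ginv g x k p * pd a (\<lambda>y. g y $ p $ q) x * ginv g x q l)"
proof -
  assume x: "x \<in> U"
  have E: "(\<Sum>q\<in>UNIV. g x $ p $ q * pd a (\<lambda>y. ginv g y q l) x) = - (\<Sum>q\<in>UNIV. pd a (\<lambda>y. g y $ p $ q) x * ginv g x q l)" for p
  proof -
    have "pd a (\<lambda>y. \<Sum>q\<in>UNIV. g y $ p $ q * ginv g y q l) x = pd a (\<lambda>y. if p = l then 1 else 0) x"
      by (rule pd_local[OF opn x]) (simp add: gh)
    also have "\<dots> = 0" by (rule pd_const)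
    finally have "(\<Sum>q\<in>UNIV. pd a (\<lambda>y. g y $ p $ q) x * ginv g x q l + g x $ p $ q * pd a (\<lambda>y. ginv g y q l) x) = 0"
      by (subst (asm) pd_sum) (auto intro!: LD_mult LDg LDh x simp: pd_mult[OF LDg[OF x] LDh[OF x]])
    then show ?thesis by (simp add: sum.distrib eq_neg_iff_add_eq_0 add.commute)
  qed
  have "pd a (\<lambda>y. ginv g y k l) x = (\<Sum>q\<in>UNIV. (if k = q then 1 else 0) * pd a (\<lambda>y. ginv g y q l) x)"
    by (rule sum_delta4[symmetric])
  also have "\<dots> = (\<Sum>q\<in>UNIV. (\<Sum>p\<in>UNIV. ginv g x k p * g x $ p $ q) * pd a (\<lambda>y. ginv g y q l) x)"
    by (simp add: hg[OF x])
  also have "\<dots> = (\<Sum>p\<in>UNIV. ginv g x k p * (\<Sum>q\<in>UNIV. g x $ p $ q * pd a (\<lambda>y. ginv g y q l) x))"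
    by (rule sum_contract[symmetric])
  also have "\<dots> = (\<Sum>p\<in>UNIV. ginv g x k p * - (\<Sum>q\<in>UNIV. pd a (\<lambda>y. g y $ p $ q) x * ginv g x q l))"
    by (simp add: E)
  also have "\<dots> = - (\<Sum>p\<in>UNIV. \<Sum>q\<in>UNIV. ginv g x k p * pd a (\<lambda>y. g y $ p $ q) x * ginv g x q l)"
    by (simp add: sum_distrib_left sum_negf mult.assoc)
  finally show ?thesis .
qed

lemma dGamL1: "x \<in> U \<Longrightarrow> pd a (\<lambda>y. \<Sum>m\<in>UNIV. g y $ d $ m * Gam g y m b c) x =
   1/2 * (pd a (pd b (\<lambda>y. g y $ c $ d)) x + pd a (pd c (\<lambda>y. g y $ b $ d)) x - pd a (pd d (\<lambda>y. g y $ b $ c)) x)"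
proof -
  assume x: "x \<in> U"
  have "pd a (\<lambda>y. \<Sum>m\<in>UNIV. g y $ d $ m * Gam g y m b c) x =
     pd a (\<lambda>y. 1/2 * (pd b (\<lambda>y. g y $ c $ d) y + pd c (\<lambda>y. g y $ b $ d) y - pd d (\<lambda>y. g y $ b $ c) y)) x"
    by (rule pd_local[OF opn x]) (simp add: Gam_low)
  also have "\<dots> = 1/2 * (pd a (pd b (\<lambda>y. g y $ c $ d)) x + pd a (pd c (\<lambda>y. g y $ b $ d)) x - pd a (pd d (\<lambda>y. g y $ b $ c)) x)"
    by (simp only: pd_cmult pd_add pd_diff LD_add LD_diff LDdg x)
  finally show ?thesis .
qed

lemma dGamL2: "x \<in> U \<Longrightarrow> pd a (\<lambda>y. \<Sum>m\<in>UNIV. g y $ d $ m * Gam g y m b c) x =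
   (\<Sum>m\<in>UNIV. pd a (\<lambda>y. g y $ d $ m) x * Gam g x m b c + g x $ d $ m * pd a (\<lambda>y. Gam g y m b c) x)"
  by (simp add: pd_sum pd_mult LD_mult LDg LDGam)

lemma dHes: "x \<in> U \<Longrightarrow> pd a (\<lambda>y. Hes g f y j k) x = pd a (pd j (pd k f)) x
    - (\<Sum>m\<in>UNIV. pd a (\<lambda>y. Gam g y m j k) x * pd m f x + Gam g x m j k * pd a (pd m f) x)"
  unfolding Hes_def
  by (simp add: pd_diff pd_sum pd_mult LD_sum LD_mult LDGam LDf1 LDf2)

lemma drho: "x \<in> U \<Longrightarrow> pd a (\<lambda>y. rho g y j k) x = pd a lam x * g x $ j $ k + lam x * pd a (\<lambda>y. g y $ j $ k) x
   - pd a (\<lambda>y. Hes g f y j k) x + mu * (pd a (pd j f) x * pd k f x + pd j f x * pd a (pd k f) x)"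
proof -
  assume x: "x \<in> U"
  have "pd a (\<lambda>y. rho g y j k) x = pd a (\<lambda>y. (lam y * g y $ j $ k - Hes g f y j k) + mu * (pd j f y * pd k f y)) x"
    by (rule pd_local[OF opn x]) (simp add: qe_eq[symmetric] algebra_simps)
  also have "\<dots> = pd a lam x * g x $ j $ k + lam x * pd a (\<lambda>y. g y $ j $ k) x
   - pd a (\<lambda>y. Hes g f y j k) x + mu * (pd a (pd j f) x * pd k f x + pd j f x * pd a (pd k f) x)"
    by (simp add: pd_add pd_diff pd_mult pd_cmult LD_add LD_diff LD_mult LD_cmult LDlam LDg LDHes LDf1 x)
  finally show ?thesis .
qed

lemma gval_grad: "x \<in> U \<Longrightarrow> gval g x (grad g f x) (grad g f x) = (\<Sum>k\<in>UNIV. \<Sum>l\<in>UNIV. ginv g x k l * pd k f x * pd l f x)"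
proof -
  assume x: "x \<in> U"
  have low: "(\<Sum>j\<in>UNIV. g x $ i $ j * grad g f x j) = pd i f x" for i
  proof -
    have "(\<Sum>j\<in>UNIV. g x $ i $ j * grad g f x j) = (\<Sum>l\<in>UNIV. (\<Sum>j\<in>UNIV. g x $ i $ j * ginv g x j l) * pd l f x)"
      unfolding grad_def by (rule sum_contract)
    also have "\<dots> = pd i f x" by (simp add: gh[OF x] sum_delta4)
    finally show ?thesis .
  qed
  have "gval g x (grad g f x) (grad g f x) = (\<Sum>i\<in>UNIV. grad g f x i * (\<Sum>j\<in>UNIV. g x $ i $ j * grad g f x j))"
    unfolding gval_def by (simp add: sum_distrib_left algebra_simps)
  also have "\<dots> = (\<Sum>i\<in>UNIV. grad g f x i * pd i f x)" by (simp add: low)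
  also have "\<dots> = (\<Sum>k\<in>UNIV. \<Sum>l\<in>UNIV. ginv g x k l * pd k f x * pd l f x)"
    unfolding grad_def by (simp add: sum_distrib_right sum_distrib_left ac_simps)
  finally show ?thesis .
qed

lemma dQ:
  assumes iso: "isotropic_on U g f" and x: "x \<in> U"
  shows "(\<Sum>k\<in>UNIV. \<Sum>l\<in>UNIV. pd a (\<lambda>y. ginv g y k l) x * pd k f x * pd l f x
      + ginv g x k l * pd a (pd k f) x * pd l f x + ginv g x k l * pd k f x * pd a (pd l f) x) = 0"
proof -
  have "pd a (\<lambda>y. \<Sum>k\<in>UNIV. \<Sum>l\<in>UNIV. ginv g y k l * pd k f y * pd l f y) x = pd a (\<lambda>y. 0) x"
    by (rule pd_local[OF opn x]) (use iso in \<open>simp add: isotropic_on_def gval_grad[symmetric]\<close>)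
  then show ?thesis
    by (simp add: pd_const pd_sum pd_mult LD_sum LD_mult LDh LDf1 x algebra_simps)
qed

end


lemma sum4_swap: "(\<Sum>k\<in>(UNIV::4 set). \<Sum>l\<in>(UNIV::4 set). \<Sum>p\<in>(UNIV::4 set). \<Sum>q\<in>(UNIV::4 set). F k l p q)
  = (\<Sum>p\<in>UNIV. \<Sum>q\<in>UNIV. \<Sum>k\<in>UNIV. \<Sum>l\<in>UNIV. (F k l p q :: real))"
proof -
  have "(\<Sum>k\<in>(UNIV::4 set). \<Sum>l\<in>(UNIV::4 set). \<Sum>p\<in>(UNIV::4 set). \<Sum>q\<in>(UNIV::4 set). F k l p q)
     = (\<Sum>k\<in>(UNIV::4 set). \<Sum>p\<in>(UNIV::4 set). \<Sum>l\<in>(UNIV::4 set). \<Sum>q\<in>(UNIV::4 set). F k l p q)"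
    by (rule sum.cong[OF refl], rule sum.swap)
  also have "\<dots> = (\<Sum>p\<in>(UNIV::4 set). \<Sum>k\<in>(UNIV::4 set). \<Sum>l\<in>(UNIV::4 set). \<Sum>q\<in>(UNIV::4 set). F k l p q)"
    by (rule sum.swap)
  also have "\<dots> = (\<Sum>p\<in>(UNIV::4 set). \<Sum>k\<in>(UNIV::4 set). \<Sum>q\<in>(UNIV::4 set). \<Sum>l\<in>(UNIV::4 set). F k l p q)"
    by (rule sum.cong[OF refl], rule sum.cong[OF refl], rule sum.swap)
  also have "\<dots> = (\<Sum>p\<in>(UNIV::4 set). \<Sum>q\<in>(UNIV::4 set). \<Sum>k\<in>(UNIV::4 set). \<Sum>l\<in>(UNIV::4 set). F k l p q)"
    by (rule sum.cong[OF refl], rule sum.swap)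
  finally show ?thesis .
qed

lemma quad: "(\<Sum>k\<in>(UNIV::4 set). \<Sum>l\<in>(UNIV::4 set). (\<Sum>p\<in>(UNIV::4 set). \<Sum>q\<in>(UNIV::4 set). A k p * D p q * B q l) * u k * (v l::real))
  = (\<Sum>p\<in>UNIV. \<Sum>q\<in>UNIV. D p q * (\<Sum>k\<in>UNIV. A k p * u k) * (\<Sum>l\<in>UNIV. B q l * v l))"
proof -
  have "(\<Sum>k\<in>(UNIV::4 set). \<Sum>l\<in>(UNIV::4 set). (\<Sum>p\<in>(UNIV::4 set). \<Sum>q\<in>(UNIV::4 set). A k p * D p q * B q l) * u k * (v l::real))
     = (\<Sum>k\<in>(UNIV::4 set). \<Sum>l\<in>(UNIV::4 set). \<Sum>p\<in>(UNIV::4 set). \<Sum>q\<in>(UNIV::4 set). D p q * (A k p * u k) * (B q l * v l))"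
    by (simp add: sum_distrib_left sum_distrib_right ac_simps)
  also have "\<dots> = (\<Sum>p\<in>UNIV. \<Sum>q\<in>UNIV. \<Sum>k\<in>UNIV. \<Sum>l\<in>UNIV. D p q * (A k p * u k) * (B q l * v l))"
    by (rule sum4_swap)
  also have "\<dots> = (\<Sum>p\<in>UNIV. \<Sum>q\<in>UNIV. D p q * (\<Sum>k\<in>UNIV. A k p * u k) * (\<Sum>l\<in>UNIV. B q l * v l))"
    by (simp add: sum_distrib_left sum_distrib_right ac_simps)
  finally show ?thesis .
qed


lemma gen3: "(\<Sum>b\<in>(UNIV::4 set). (\<Sum>m\<in>(UNIV::4 set). 1/2 * (P b m + Q b m - R b m) * N m) * N b)
  = 1/2 * (\<Sum>b\<in>UNIV. \<Sum>m\<in>UNIV. P b m * N m * N b) + 1/2 * (\<Sum>b\<in>UNIV. \<Sum>m\<in>UNIV. Q b m * N m * N b)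
    - 1/2 * (\<Sum>b\<in>UNIV. \<Sum>m\<in>UNIV. R b m * N m * (N b::real))"
  by (simp add: sum_distrib_left sum_distrib_right sum.distrib sum_subtractf algebra_simps)

context setting begin

lemma low: "x \<in> U \<Longrightarrow> (\<Sum>j\<in>UNIV. g x $ i $ j * grad g f x j) = pd i f x"
proof -
  assume x: "x \<in> U"
  have "(\<Sum>j\<in>UNIV. g x $ i $ j * grad g f x j) = (\<Sum>l\<in>UNIV. (\<Sum>j\<in>UNIV. g x $ i $ j * ginv g x j l) * pd l f x)"
    unfolding grad_def by (rule sum_contract)
  also have "\<dots> = pd i f x" by (simp add: gh[OF x] sum_delta4)
  finally show ?thesis .
qed

lemma gradT: "x \<in> U \<Longrightarrow> (\<Sum>k\<in>UNIV. ginv g x k p * pd k f x) = grad g f x p"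
  unfolding grad_def by (simp add: hsym[of x p] mult.commute)

lemma HN:
  assumes iso: "isotropic_on U g f" and x: "x \<in> U"
  shows "(\<Sum>b\<in>UNIV. Hes g f x a b * grad g f x b) = 0"
proof -
  define N where "N = grad g f x"
  define dG where "dG = (\<lambda>a p q. pd a (\<lambda>y. g y $ p $ q) x)"
  define F2 where "F2 = (\<lambda>b. pd a (pd b f) x)"
  have t1: "(\<Sum>k\<in>UNIV. \<Sum>l\<in>UNIV. pd a (\<lambda>y. ginv g y k l) x * pd k f x * pd l f x)
      = - (\<Sum>p\<in>UNIV. \<Sum>q\<in>UNIV. dG a p q * N p * N q)"
  proof -
    have "(\<Sum>k\<in>UNIV. \<Sum>l\<in>UNIV. pd a (\<lambda>y. ginv g y k l) x * pd k f x * pd l f x)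
      = - (\<Sum>k\<in>UNIV. \<Sum>l\<in>UNIV. (\<Sum>p\<in>UNIV. \<Sum>q\<in>UNIV. ginv g x k p * dG a p q * ginv g x q l) * pd k f x * pd l f x)"
      by (simp add: dh[OF x] dG_def sum_negf)
    also have "\<dots> = - (\<Sum>p\<in>UNIV. \<Sum>q\<in>UNIV. dG a p q * (\<Sum>k\<in>UNIV. ginv g x k p * pd k f x) * (\<Sum>l\<in>UNIV. ginv g x q l * pd l f x))"
      by (subst quad) simp
    also have "\<dots> = - (\<Sum>p\<in>UNIV. \<Sum>q\<in>UNIV. dG a p q * N p * N q)"
      by (simp add: gradT[OF x] N_def grad_def)
    finally show ?thesis .
  qed
  have t2: "(\<Sum>k\<in>UNIV. \<Sum>l\<in>UNIV. ginv g x k l * F2 k * pd l f x) = (\<Sum>b\<in>UNIV. F2 b * N b)"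
    unfolding N_def grad_def by (simp add: sum_distrib_left ac_simps)
  have t3: "(\<Sum>k\<in>UNIV. \<Sum>l\<in>UNIV. ginv g x k l * pd k f x * F2 l) = (\<Sum>b\<in>UNIV. F2 b * N b)"
  proof -
    have "(\<Sum>k\<in>UNIV. \<Sum>l\<in>UNIV. ginv g x k l * pd k f x * F2 l) = (\<Sum>l\<in>UNIV. \<Sum>k\<in>UNIV. ginv g x k l * pd k f x * F2 l)"
      by (rule sum.swap)
    also have "\<dots> = (\<Sum>l\<in>UNIV. (\<Sum>k\<in>UNIV. ginv g x k l * pd k f x) * F2 l)"
      by (simp add: sum_distrib_right)
    also have "\<dots> = (\<Sum>b\<in>UNIV. F2 b * N b)" by (simp only: gradT[OF x]) (simp add: N_def mult.commute)
    finally show ?thesis .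
  qed
  have Q: "2 * (\<Sum>b\<in>UNIV. F2 b * N b) = (\<Sum>p\<in>UNIV. \<Sum>q\<in>UNIV. dG a p q * N p * N q)"
  proof -
    have "(\<Sum>k\<in>UNIV. \<Sum>l\<in>UNIV. pd a (\<lambda>y. ginv g y k l) x * pd k f x * pd l f x)
       + (\<Sum>k\<in>UNIV. \<Sum>l\<in>UNIV. ginv g x k l * F2 k * pd l f x)
       + (\<Sum>k\<in>UNIV. \<Sum>l\<in>UNIV. ginv g x k l * pd k f x * F2 l) = 0"
      using dQ[OF iso x, of a] unfolding F2_def by (simp add: sum.distrib)
    then show ?thesis using t1 t2 t3 by simp
  qed
  have Gf: "(\<Sum>k\<in>UNIV. Gam g x k a b * pd k f x) = (\<Sum>m\<in>UNIV. 1/2 * (dG a b m + dG b a m - dG m a b) * N m)" for b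
  proof -
    have "(\<Sum>k\<in>UNIV. Gam g x k a b * pd k f x) = (\<Sum>k\<in>UNIV. Gam g x k a b * (\<Sum>m\<in>UNIV. g x $ k $ m * N m))"
      by (simp add: low[OF x] N_def)
    also have "\<dots> = (\<Sum>m\<in>UNIV. (\<Sum>k\<in>UNIV. Gam g x k a b * g x $ k $ m) * N m)"
      by (rule sum_contract)
    also have "\<dots> = (\<Sum>m\<in>UNIV. (\<Sum>k\<in>UNIV. g x $ m $ k * Gam g x k a b) * N m)"
    proof -
      have e: "Gam g x k a b * g x $ k $ m = g x $ m $ k * Gam g x k a b" for k m
        by (subst lm_sym[OF lm x]) (rule mult.commute)
      show ?thesis by (simp only: e)
    qed
    also have "\<dots> = (\<Sum>m\<in>UNIV. 1/2 * (dG a b m + dG b a m - dG m a b) * N m)"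
      by (simp add: Gam_low[OF x] dG_def)
    finally show ?thesis .
  qed
  have cancel: "(\<Sum>b\<in>UNIV. \<Sum>m\<in>UNIV. dG b a m * N m * N b) = (\<Sum>b\<in>UNIV. \<Sum>m\<in>UNIV. dG m a b * N m * N b)"
  proof -
    have "(\<Sum>b\<in>UNIV. \<Sum>m\<in>UNIV. dG m a b * N m * N b) = (\<Sum>m\<in>UNIV. \<Sum>b\<in>UNIV. dG m a b * N m * N b)"
      by (rule sum.swap)
    also have "\<dots> = (\<Sum>b\<in>UNIV. \<Sum>m\<in>UNIV. dG b a m * N m * N b)"
      by (simp add: dG_def dG_sym[OF x, of _ a] ac_simps)
    finally show ?thesis by simp
  qed
  have "(\<Sum>b\<in>UNIV. Hes g f x a b * N b) = (\<Sum>b\<in>UNIV. F2 b * N b) - (\<Sum>b\<in>UNIV. (\<Sum>m\<in>UNIV. 1/2 * (dG a b m + dG b a m - dG m a b) * N m) * N b)"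
    unfolding Hes_def F2_def by (simp add: Gf left_diff_distrib sum_subtractf)
  also have "\<dots> = (\<Sum>b\<in>UNIV. F2 b * N b) - (1/2 * (\<Sum>b\<in>UNIV. \<Sum>m\<in>UNIV. dG a b m * N m * N b)
      + 1/2 * (\<Sum>b\<in>UNIV. \<Sum>m\<in>UNIV. dG b a m * N m * N b) - 1/2 * (\<Sum>b\<in>UNIV. \<Sum>m\<in>UNIV. dG m a b * N m * N b))"
    by (subst gen3) (rule refl)
  also have "\<dots> = 0"
  proof -
    have "(\<Sum>b\<in>UNIV. \<Sum>m\<in>UNIV. dG a b m * N m * N b) = (\<Sum>p\<in>UNIV. \<Sum>q\<in>UNIV. dG a p q * N p * N q)"
      by (simp add: ac_simps)
    then show ?thesis using Q cancel by linarith
  qed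
  finally show ?thesis unfolding N_def .
qed

end


context setting begin

lemma compat: "x \<in> U \<Longrightarrow> pd a (\<lambda>y. g y $ b $ c) x =
   (\<Sum>m\<in>UNIV. Gam g x m a b * g x $ m $ c) + (\<Sum>m\<in>UNIV. Gam g x m a c * g x $ b $ m)"
proof -
  assume x: "x \<in> U"
  have e1: "(\<Sum>m\<in>UNIV. Gam g x m a b * g x $ m $ c) = (\<Sum>m\<in>UNIV. g x $ c $ m * Gam g x m a b)"
  proof -
    have e: "Gam g x m a b * g x $ m $ c = g x $ c $ m * Gam g x m a b" for m
      by (subst lm_sym[OF lm x]) (rule mult.commute)
    show ?thesis by (simp only: e)
  qed
  have e2: "(\<Sum>m\<in>UNIV. Gam g x m a c * g x $ b $ m) = (\<Sum>m\<in>UNIV. g x $ b $ m * Gam g x m a c)"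
    by (simp add: mult.commute)
  show ?thesis unfolding e1 e2 Gam_low[OF x]
    using dG_sym[OF x, of a b c] by (simp add: field_simps)
qed

lemma D_anti: "x \<in> U \<Longrightarrow> pd a (\<lambda>y. rho g y b c) x - pd b (\<lambda>y. rho g y a c) x =
   pd a lam x * g x $ b $ c - pd b lam x * g x $ a $ c
   + lam x * (pd a (\<lambda>y. g y $ b $ c) x - pd b (\<lambda>y. g y $ a $ c) x)
   + (\<Sum>m\<in>UNIV. (pd a (\<lambda>y. Gam g y m b c) x - pd b (\<lambda>y. Gam g y m a c) x) * pd m f x)
   + (\<Sum>m\<in>UNIV. Gam g x m b c * pd a (pd m f) x - Gam g x m a c * pd b (pd m f) x)
   + mu * (pd b f x * pd a (pd c f) x - pd a f x * pd b (pd c f) x)"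
proof -
  assume x: "x \<in> U"
  have f3: "pd a (pd b (pd c f)) x = pd b (pd a (pd c f)) x" by (rule f3_sym[OF x])
  have f2: "pd a (pd b f) x = pd b (pd a f) x" by (rule f2_sym[OF x])
  show ?thesis
    unfolding drho[OF x] dHes[OF x] f3 f2
    by (simp add: algebra_simps sum_subtractf sum.distrib)
qed


lemma S_exp: "x \<in> U \<Longrightarrow> (\<Sum>m\<in>UNIV. Gam g x m a c * rho g x b m) =
    lam x * (\<Sum>m\<in>UNIV. Gam g x m a c * g x $ b $ m)
  - (\<Sum>m\<in>UNIV. Gam g x m a c * pd b (pd m f) x)
  + (\<Sum>m\<in>UNIV. \<Sum>n\<in>UNIV. Gam g x m a c * Gam g x n b m * pd n f x)
  + mu * pd b f x * (\<Sum>m\<in>UNIV. Gam g x m a c * pd m f x)"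
proof -
  assume x: "x \<in> U"
  have r: "rho g x b m = lam x * g x $ b $ m - (pd b (pd m f) x - (\<Sum>n\<in>UNIV. Gam g x n b m * pd n f x)) + mu * pd b f x * pd m f x" for m
    using qe_eq[OF x, of b m] unfolding Hes_def by (simp add: algebra_simps)
  show ?thesis unfolding r
    by (simp add: sum_distrib_left sum_distrib_right sum.distrib sum_subtractf algebra_simps)
qed

lemma GG_swap: "(\<Sum>m\<in>UNIV. \<Sum>n\<in>UNIV. Gam g x m b c * Gam g x n a m * pd n f x)
   - (\<Sum>m\<in>UNIV. \<Sum>n\<in>UNIV. Gam g x m a c * Gam g x n b m * pd n f x)
  = (\<Sum>n\<in>UNIV. (\<Sum>m\<in>UNIV. Gam g x n a m * Gam g x m b c - Gam g x n b m * Gam g x m a c) * pd n f x)"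
proof -
  have "(\<Sum>n\<in>UNIV. (\<Sum>m\<in>UNIV. Gam g x n a m * Gam g x m b c - Gam g x n b m * Gam g x m a c) * pd n f x)
     = (\<Sum>n\<in>UNIV. \<Sum>m\<in>UNIV. Gam g x m b c * Gam g x n a m * pd n f x)
       - (\<Sum>n\<in>UNIV. \<Sum>m\<in>UNIV. Gam g x m a c * Gam g x n b m * pd n f x)"
    by (simp add: sum_distrib_left sum_distrib_right sum_subtractf algebra_simps)
  also have "\<dots> = (\<Sum>m\<in>UNIV. \<Sum>n\<in>UNIV. Gam g x m b c * Gam g x n a m * pd n f x)
       - (\<Sum>m\<in>UNIV. \<Sum>n\<in>UNIV. Gam g x m a c * Gam g x n b m * pd n f x)"
    by (subst (1 2) sum.swap) (rule refl)
  finally show ?thesis by simp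
qed

lemma commR_exp: "(\<Sum>n\<in>UNIV. commR g x a b c n * pd n f x) =
    (\<Sum>m\<in>UNIV. (pd a (\<lambda>y. Gam g y m b c) x - pd b (\<lambda>y. Gam g y m a c) x) * pd m f x)
  + (\<Sum>n\<in>UNIV. (\<Sum>m\<in>UNIV. Gam g x n a m * Gam g x m b c - Gam g x n b m * Gam g x m a c) * pd n f x)"
  unfolding commR_def sum.distrib[symmetric] by (rule sum.cong) (simp_all add: algebra_simps)

lemma nrho_anti:
  assumes x: "x \<in> U"
  shows "nabla_rho g x a b c - nabla_rho g x b a c = pd a lam x * g x $ b $ c - pd b lam x * g x $ a $ c
   + mu * (pd b f x * Hes g f x a c - pd a f x * Hes g f x b c) + (\<Sum>n\<in>UNIV. commR g x a b c n * pd n f x)"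
proof -
  have gs: "(\<Sum>m\<in>UNIV. Gam g x m b a * rho g x m c) = (\<Sum>m\<in>UNIV. Gam g x m a b * rho g x m c)"
    by (simp add: Gam_sym[OF x, of _ a b])
  have gs2: "(\<Sum>m\<in>UNIV. Gam g x m b a * g x $ m $ c) = (\<Sum>m\<in>UNIV. Gam g x m a b * g x $ m $ c)"
    by (simp add: Gam_sym[OF x, of _ a b])
  have N: "nabla_rho g x a b c - nabla_rho g x b a c =
     (pd a (\<lambda>y. rho g y b c) x - pd b (\<lambda>y. rho g y a c) x)
     - (\<Sum>m\<in>UNIV. Gam g x m a c * rho g x b m) + (\<Sum>m\<in>UNIV. Gam g x m b c * rho g x a m)"
    unfolding nabla_rho_def sum.distrib using gs by simp
  have H1: "Hes g f x a c = pd a (pd c f) x - (\<Sum>m\<in>UNIV. Gam g x m a c * pd m f x)" unfolding Hes_def ..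
  have H2: "Hes g f x b c = pd b (pd c f) x - (\<Sum>m\<in>UNIV. Gam g x m b c * pd m f x)" unfolding Hes_def ..
  have sub: "(\<Sum>m\<in>UNIV. Gam g x m b c * pd a (pd m f) x - Gam g x m a c * pd b (pd m f) x)
     = (\<Sum>m\<in>UNIV. Gam g x m b c * pd a (pd m f) x) - (\<Sum>m\<in>UNIV. Gam g x m a c * pd b (pd m f) x)"
    by (rule sum_subtractf)
  have ca: "pd a (\<lambda>y. g y $ b $ c) x = (\<Sum>m\<in>UNIV. Gam g x m a b * g x $ m $ c) + (\<Sum>m\<in>UNIV. Gam g x m a c * g x $ b $ m)"
    by (rule compat[OF x])
  have cb: "pd b (\<lambda>y. g y $ a $ c) x = (\<Sum>m\<in>UNIV. Gam g x m a b * g x $ m $ c) + (\<Sum>m\<in>UNIV. Gam g x m b c * g x $ a $ m)"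
    using compat[OF x, of b a c] gs2 by simp
  show ?thesis
    unfolding N D_anti[OF x] S_exp[OF x] S_exp[OF x, of b c a] commR_exp H1 H2 sub
    using GG_swap[of x b c a] ca cb
    by (simp add: algebra_simps)
qed

end


definition Lw :: "metric \<Rightarrow> pt \<Rightarrow> 4 \<Rightarrow> 4 \<Rightarrow> 4 \<Rightarrow> real" where
  "Lw g x d i j = (\<Sum>m\<in>UNIV. g x $ d $ m * Gam g x m i j)"

definition P2 :: "metric \<Rightarrow> pt \<Rightarrow> 4 \<Rightarrow> 4 \<Rightarrow> 4 \<Rightarrow> 4 \<Rightarrow> real" where
  "P2 g x a b c d = pd a (pd b (\<lambda>y. g y $ c $ d)) x + pd a (pd c (\<lambda>y. g y $ b $ d)) x - pd a (pd d (\<lambda>y. g y $ b $ c)) x"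

lemma lin_aux: "(r1::real) = - (1/2*(p1 - p2) - s1 + s2) \<Longrightarrow> r2 = -(1/2*(p3 - p4) - s3 + s4) \<Longrightarrow> p1 - p2 + p3 - p4 = 0 \<Longrightarrow> s1 = s4 \<Longrightarrow> s2 = s3 \<Longrightarrow> r1 = - r2"
  by (simp add: field_simps)

context setting begin

lemma gsw: "x \<in> U \<Longrightarrow> (\<Sum>l\<in>UNIV. F l * g x $ l $ d) = (\<Sum>l\<in>UNIV. g x $ d $ l * F l)"
proof -
  assume x: "x \<in> U"
  have e: "F l * g x $ l $ d = g x $ d $ l * F l" for l
    by (subst lm_sym[OF lm x]) (rule mult.commute)
  show ?thesis by (simp only: e)
qed

lemma dGam_low: "x \<in> U \<Longrightarrow> (\<Sum>l\<in>UNIV. pd a (\<lambda>y. Gam g y l b c) x * g x $ l $ d)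
   = 1/2 * P2 g x a b c d - (\<Sum>m\<in>UNIV. pd a (\<lambda>y. g y $ d $ m) x * Gam g x m b c)"
proof -
  assume x: "x \<in> U"
  have "(\<Sum>m\<in>UNIV. pd a (\<lambda>y. g y $ d $ m) x * Gam g x m b c + g x $ d $ m * pd a (\<lambda>y. Gam g y m b c) x) = 1/2 * P2 g x a b c d"
    using dGamL1[OF x, of a d b c] dGamL2[OF x, of a d b c] unfolding P2_def by simp
  then show ?thesis unfolding gsw[OF x] sum.distrib by simp
qed

lemma GG_low: "x \<in> U \<Longrightarrow> (\<Sum>l\<in>UNIV. (\<Sum>m\<in>UNIV. Gam g x l a m * Gam g x m b c - Gam g x l b m * Gam g x m a c) * g x $ l $ d)
   = (\<Sum>m\<in>UNIV. Lw g x d a m * Gam g x m b c) - (\<Sum>m\<in>UNIV. Lw g x d b m * Gam g x m a c)"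
proof -
  assume x: "x \<in> U"
  have "(\<Sum>l\<in>UNIV. (\<Sum>m\<in>UNIV. Gam g x l a m * Gam g x m b c - Gam g x l b m * Gam g x m a c) * g x $ l $ d)
     = (\<Sum>l\<in>UNIV. g x $ d $ l * (\<Sum>m\<in>UNIV. Gam g x l a m * Gam g x m b c - Gam g x l b m * Gam g x m a c))"
    by (rule gsw[OF x])
  also have "\<dots> = (\<Sum>l\<in>UNIV. \<Sum>m\<in>UNIV. g x $ d $ l * Gam g x l a m * Gam g x m b c)
      - (\<Sum>l\<in>UNIV. \<Sum>m\<in>UNIV. g x $ d $ l * Gam g x l b m * Gam g x m a c)"
    by (simp add: sum_distrib_left sum_subtractf algebra_simps)
  also have "\<dots> = (\<Sum>m\<in>UNIV. \<Sum>l\<in>UNIV. g x $ d $ l * Gam g x l a m * Gam g x m b c)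
      - (\<Sum>m\<in>UNIV. \<Sum>l\<in>UNIV. g x $ d $ l * Gam g x l b m * Gam g x m a c)"
    by (subst (1 2) sum.swap) (rule refl)
  also have "\<dots> = (\<Sum>m\<in>UNIV. Lw g x d a m * Gam g x m b c) - (\<Sum>m\<in>UNIV. Lw g x d b m * Gam g x m a c)"
    unfolding Lw_def by (simp add: sum_distrib_right)
  finally show ?thesis .
qed

lemma dG_Lw: "x \<in> U \<Longrightarrow> pd a (\<lambda>y. g y $ d $ m) x = Lw g x m a d + Lw g x d a m"
proof -
  assume x: "x \<in> U"
  have "pd a (\<lambda>y. g y $ d $ m) x = (\<Sum>k\<in>UNIV. Gam g x k a d * g x $ k $ m) + (\<Sum>k\<in>UNIV. Gam g x k a m * g x $ d $ k)"
    by (rule compat[OF x])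
  also have "\<dots> = Lw g x m a d + Lw g x d a m"
    unfolding Lw_def gsw[OF x] by (simp add: mult.commute)
  finally show ?thesis .
qed

lemma K_form: "x \<in> U \<Longrightarrow> (\<Sum>l\<in>UNIV. commR g x a b c l * g x $ l $ d) =
   1/2 * (P2 g x a b c d - P2 g x b a c d) - (\<Sum>m\<in>UNIV. Lw g x m a d * Gam g x m b c) + (\<Sum>m\<in>UNIV. Lw g x m b d * Gam g x m a c)"
proof -
  assume x: "x \<in> U"
  have "(\<Sum>l\<in>UNIV. commR g x a b c l * g x $ l $ d) =
     (\<Sum>l\<in>UNIV. pd a (\<lambda>y. Gam g y l b c) x * g x $ l $ d) - (\<Sum>l\<in>UNIV. pd b (\<lambda>y. Gam g y l a c) x * g x $ l $ d)
     + (\<Sum>l\<in>UNIV. (\<Sum>m\<in>UNIV. Gam g x l a m * Gam g x m b c - Gam g x l b m * Gam g x m a c) * g x $ l $ d)"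
    unfolding commR_def sum_subtractf[symmetric] sum.distrib[symmetric]
    by (rule sum.cong) (simp_all add: algebra_simps)
  also have "\<dots> = 1/2 * P2 g x a b c d - (\<Sum>m\<in>UNIV. (Lw g x m a d + Lw g x d a m) * Gam g x m b c)
      - (1/2 * P2 g x b a c d - (\<Sum>m\<in>UNIV. (Lw g x m b d + Lw g x d b m) * Gam g x m a c))
      + ((\<Sum>m\<in>UNIV. Lw g x d a m * Gam g x m b c) - (\<Sum>m\<in>UNIV. Lw g x d b m * Gam g x m a c))"
    unfolding dGam_low[OF x] GG_low[OF x] dG_Lw[OF x] ..
  also have "\<dots> = 1/2 * (P2 g x a b c d - P2 g x b a c d) - (\<Sum>m\<in>UNIV. Lw g x m a d * Gam g x m b c) + (\<Sum>m\<in>UNIV. Lw g x m b d * Gam g x m a c)"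
    by (simp add: algebra_simps sum.distrib)
  finally show ?thesis .
qed

lemma Bsym: "x \<in> U \<Longrightarrow> (\<Sum>m\<in>UNIV. Lw g x m a d * Gam g x m b c) = (\<Sum>m\<in>UNIV. Lw g x m b c * Gam g x m a d)"
proof -
  assume x: "x \<in> U"
  have "(\<Sum>m\<in>UNIV. Lw g x m a d * Gam g x m b c) = (\<Sum>m\<in>UNIV. \<Sum>k\<in>UNIV. g x $ m $ k * Gam g x k a d * Gam g x m b c)"
    unfolding Lw_def by (simp add: sum_distrib_right)
  also have "\<dots> = (\<Sum>k\<in>UNIV. \<Sum>m\<in>UNIV. g x $ m $ k * Gam g x k a d * Gam g x m b c)"
    by (rule sum.swap)
  also have "\<dots> = (\<Sum>k\<in>UNIV. \<Sum>m\<in>UNIV. g x $ k $ m * Gam g x m b c * Gam g x k a d)"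
  proof -
    have e: "g x $ m $ k * Gam g x k a d * Gam g x m b c = g x $ k $ m * Gam g x m b c * Gam g x k a d" for m k
      by (subst lm_sym[OF lm x]) (simp add: ac_simps)
    show ?thesis by (simp only: e)
  qed
  also have "\<dots> = (\<Sum>m\<in>UNIV. Lw g x m b c * Gam g x m a d)"
    unfolding Lw_def by (simp add: sum_distrib_right)
  finally show ?thesis .
qed

lemma P2_sym: "x \<in> U \<Longrightarrow> P2 g x a b c d - P2 g x b a c d + P2 g x a b d c - P2 g x b a d c = 0"
proof -
  assume x: "x \<in> U"
  have s1: "pd a (pd b (\<lambda>y. g y $ c $ d)) x = pd b (pd a (\<lambda>y. g y $ c $ d)) x" by (rule d2G_sym1[OF x])
  have s2: "pd a (pd b (\<lambda>y. g y $ d $ c)) x = pd b (pd a (\<lambda>y. g y $ d $ c)) x" by (rule d2G_sym1[OF x])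
  have t1: "pd a (pd c (\<lambda>y. g y $ b $ d)) x = pd a (pd c (\<lambda>y. g y $ d $ b)) x" by (rule d2G_sym2[OF x])
  have t2: "pd a (pd d (\<lambda>y. g y $ b $ c)) x = pd a (pd d (\<lambda>y. g y $ c $ b)) x" by (rule d2G_sym2[OF x])
  have t3: "pd b (pd c (\<lambda>y. g y $ a $ d)) x = pd b (pd c (\<lambda>y. g y $ d $ a)) x" by (rule d2G_sym2[OF x])
  have t4: "pd b (pd d (\<lambda>y. g y $ a $ c)) x = pd b (pd d (\<lambda>y. g y $ c $ a)) x" by (rule d2G_sym2[OF x])
  show ?thesis unfolding P2_def using s1 s2 t1 t2 t3 t4 by linarith
qed

lemma Rm_anti: "x \<in> U \<Longrightarrow> Rm g x a b c d = - Rm g x a b d c"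
proof -
  assume x: "x \<in> U"
  have r: "Rm g x a b c d = - (\<Sum>l\<in>UNIV. commR g x a b c l * g x $ l $ d)" for c d
    unfolding Rm_def Rop_def by (simp add: sum_negf)
  have r1: "Rm g x a b c d = - (1/2 * (P2 g x a b c d - P2 g x b a c d) - (\<Sum>m\<in>UNIV. Lw g x m a d * Gam g x m b c) + (\<Sum>m\<in>UNIV. Lw g x m b d * Gam g x m a c))"
    unfolding r K_form[OF x] ..
  have r2: "Rm g x a b d c = - (1/2 * (P2 g x a b d c - P2 g x b a d c) - (\<Sum>m\<in>UNIV. Lw g x m a c * Gam g x m b d) + (\<Sum>m\<in>UNIV. Lw g x m b c * Gam g x m a d))"
    unfolding r K_form[OF x] ..
  show ?thesis by (rule lin_aux[OF r1 r2 P2_sym[OF x, of a b c d] Bsym[OF x, of a d b c] Bsym[OF x, of b d a c]])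
qed

end


context setting begin

lemma Rm_anti1: "Rm g x a b c d = - Rm g x b a c d"
proof -
  have "commR g x a b c l = - commR g x b a c l" for l
    unfolding commR_def by (simp add: sum_subtractf algebra_simps)
  then show ?thesis unfolding Rm_def Rop_def by (simp add: sum_negf)
qed

lemma lowT: "x \<in> U \<Longrightarrow> (\<Sum>j\<in>UNIV. g x $ j $ k * grad g f x j) = pd k f x"
  using low[of x k] lm_sym[OF lm] by simp

lemma RmN_commR: "x \<in> U \<Longrightarrow> (\<Sum>d\<in>UNIV. Rm g x a b c d * grad g f x d) = - (\<Sum>l\<in>UNIV. commR g x a b c l * pd l f x)"
proof -
  assume x: "x \<in> U"
  have "(\<Sum>d\<in>UNIV. Rm g x a b c d * grad g f x d) = (\<Sum>d\<in>UNIV. (\<Sum>l\<in>UNIV. - commR g x a b c l * g x $ l $ d) * grad g f x d)"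
    unfolding Rm_def Rop_def ..
  also have "\<dots> = (\<Sum>l\<in>UNIV. - commR g x a b c l * (\<Sum>d\<in>UNIV. g x $ l $ d * grad g f x d))"
    by (rule sum_contract[symmetric])
  also have "\<dots> = - (\<Sum>l\<in>UNIV. commR g x a b c l * pd l f x)"
    by (simp add: low[OF x] sum_negf)
  finally show ?thesis .
qed

lemma Rm_trace: "x \<in> U \<Longrightarrow> (\<Sum>a\<in>UNIV. \<Sum>c\<in>UNIV. ginv g x a c * Rm g x a b c d) = rho g x b d"
proof -
  assume x: "x \<in> U"
  have e: "Rm g x a b c d = Rm g x b a d c" for a c
    using Rm_anti1[of x a b c d] Rm_anti[OF x, of b a c d] by simp
  have "(\<Sum>a\<in>UNIV. \<Sum>c\<in>UNIV. ginv g x a c * Rm g x a b c d) = (\<Sum>a\<in>UNIV. \<Sum>c\<in>UNIV. ginv g x a c * (\<Sum>l\<in>UNIV. Rop g x b a d l * g x $ l $ c))"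
    by (subst e) (simp only: Rm_def)
  also have "\<dots> = (\<Sum>a\<in>UNIV. \<Sum>l\<in>UNIV. Rop g x b a d l * (\<Sum>c\<in>UNIV. g x $ l $ c * ginv g x c a))"
  proof (rule sum.cong[OF refl])
    fix a
    have "(\<Sum>c\<in>UNIV. ginv g x a c * (\<Sum>l\<in>UNIV. Rop g x b a d l * g x $ l $ c))
       = (\<Sum>c\<in>UNIV. \<Sum>l\<in>UNIV. Rop g x b a d l * (g x $ l $ c * ginv g x c a))"
      by (simp add: sum_distrib_left hsym[OF x, of a] ac_simps)
    also have "\<dots> = (\<Sum>l\<in>UNIV. \<Sum>c\<in>UNIV. Rop g x b a d l * (g x $ l $ c * ginv g x c a))"
      by (rule sum.swap)
    also have "\<dots> = (\<Sum>l\<in>UNIV. Rop g x b a d l * (\<Sum>c\<in>UNIV. g x $ l $ c * ginv g x c a))"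
      by (simp add: sum_distrib_left)
    finally show "(\<Sum>c\<in>UNIV. ginv g x a c * (\<Sum>l\<in>UNIV. Rop g x b a d l * g x $ l $ c))
       = (\<Sum>l\<in>UNIV. Rop g x b a d l * (\<Sum>c\<in>UNIV. g x $ l $ c * ginv g x c a))" .
  qed
  also have "\<dots> = (\<Sum>a\<in>UNIV. Rop g x b a d a)"
  proof -
    have e2: "Rop g x b a d l * (if l = a then 1 else 0) = (if l = a then Rop g x b a d a else 0)" for a l
      by simp
    show ?thesis by (simp add: gh[OF x] e2)
  qed
  also have "\<dots> = rho g x b d" unfolding rho_def ..
  finally show ?thesis .
qed

end


locale setting2 = setting +
  assumes iso: "isotropic_on U g f"
    and mu: "mu \<noteq> - 1/2"
    and dW: "\<forall>x\<in>U. \<forall>i j k. divW g x i j k = 0"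
    and WN: "\<forall>x\<in>U. \<forall>i k. (\<Sum>j\<in>UNIV. \<Sum>l\<in>UNIV. Weyl g x i j k l * grad g f x j * grad g f x l) = 0"
begin

lemma Hes_sym: "x \<in> U \<Longrightarrow> Hes g f x a b = Hes g f x b a"
  unfolding Hes_def using f2_sym[of x a b] Gam_sym[of x _ a b] by simp

lemma Qz: "x \<in> U \<Longrightarrow> (\<Sum>j\<in>UNIV. pd j f x * grad g f x j) = 0"
proof -
  assume x: "x \<in> U"
  have "(\<Sum>j\<in>UNIV. pd j f x * grad g f x j) = gval g x (grad g f x) (grad g f x)"
    unfolding gval_grad[OF x] grad_def by (simp add: sum_distrib_left ac_simps)
  then show ?thesis using iso x unfolding isotropic_on_def by simp
qed

lemma HNT: "x \<in> U \<Longrightarrow> (\<Sum>j\<in>UNIV. Hes g f x j k * grad g f x j) = 0"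
  using HN[OF iso, of x k] Hes_sym[of x] by simp

lemma rhoN: "x \<in> U \<Longrightarrow> (\<Sum>l\<in>UNIV. rho g x i l * grad g f x l) = lam x * pd i f x"
proof -
  assume x: "x \<in> U"
  have r: "rho g x i l = lam x * g x $ i $ l - Hes g f x i l + mu * pd i f x * pd l f x" for l
    using qe_eq[OF x, of i l] by simp
  have "(\<Sum>l\<in>UNIV. rho g x i l * grad g f x l) = lam x * (\<Sum>l\<in>UNIV. g x $ i $ l * grad g f x l)
     - (\<Sum>l\<in>UNIV. Hes g f x i l * grad g f x l) + mu * pd i f x * (\<Sum>l\<in>UNIV. pd l f x * grad g f x l)"
    unfolding r by (simp add: sum_distrib_left sum.distrib sum_subtractf algebra_simps)
  then show ?thesis using low[OF x, of i] HN[OF iso x, of i] Qz[OF x] by simp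
qed

lemma rhoNT: "x \<in> U \<Longrightarrow> (\<Sum>j\<in>UNIV. rho g x j k * grad g f x j) = lam x * pd k f x"
proof -
  assume x: "x \<in> U"
  have r: "rho g x j k = lam x * g x $ j $ k - Hes g f x j k + mu * pd k f x * pd j f x" for j
  proof -
    have "mu * pd k f x * pd j f x = mu * pd j f x * pd k f x" by simp
    then show ?thesis using qe_eq[OF x, of j k] by linarith
  qed
  have "(\<Sum>j\<in>UNIV. rho g x j k * grad g f x j) = lam x * (\<Sum>j\<in>UNIV. g x $ j $ k * grad g f x j)
     - (\<Sum>j\<in>UNIV. Hes g f x j k * grad g f x j) + mu * pd k f x * (\<Sum>j\<in>UNIV. pd j f x * grad g f x j)"
    unfolding r by (simp add: sum_distrib_left sum.distrib sum_subtractf algebra_simps)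
  then show ?thesis using lowT[OF x, of k] HNT[OF x, of k] Qz[OF x] by simp
qed

definition beta :: "pt \<Rightarrow> 4 \<Rightarrow> real" where
  "beta x a = pd a lam x - pd a (scal g) x / 6"

lemma star: "x \<in> U \<Longrightarrow> (\<Sum>d\<in>UNIV. Rm g x a b c d * grad g f x d) =
   beta x a * g x $ b $ c - beta x b * g x $ a $ c + mu * (pd b f x * Hes g f x a c - pd a f x * Hes g f x b c)"
proof -
  assume x: "x \<in> U"
  have "divW g x a b c = 0" using dW x by blast
  then have "nabla_rho g x a b c - nabla_rho g x b a c = 1/6 * (pd a (scal g) x * g x $ b $ c - pd b (scal g) x * g x $ a $ c)"
    unfolding divW_def by (simp add: field_simps)
  then show ?thesis unfolding RmN_commR[OF x] beta_def using nrho_anti[OF x, of a b c]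
    by (simp add: field_simps)
qed

end


context setting2 begin

lemma WeylN_inner: "x \<in> U \<Longrightarrow> (\<Sum>l\<in>UNIV. Weyl g x i j k l * grad g f x l) =
   (beta x i * g x $ j $ k - beta x j * g x $ i $ k + mu * (pd j f x * Hes g f x i k - pd i f x * Hes g f x j k))
   + scal g x / 6 * (g x $ i $ k * pd j f x - pd i f x * g x $ j $ k)
   + 1/2 * (lam x * pd i f x * g x $ j $ k - rho g x i k * pd j f x + rho g x j k * pd i f x - lam x * pd j f x * g x $ i $ k)"
proof -
  assume x: "x \<in> U"
  have "(\<Sum>l\<in>UNIV. Weyl g x i j k l * grad g f x l) =
    (\<Sum>l\<in>UNIV. Rm g x i j k l * grad g f x l)
    + scal g x / 6 * (g x $ i $ k * (\<Sum>l\<in>UNIV. g x $ j $ l * grad g f x l) - (\<Sum>l\<in>UNIV. g x $ i $ l * grad g f x l) * g x $ j $ k)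
    + 1/2 * ((\<Sum>l\<in>UNIV. rho g x i l * grad g f x l) * g x $ j $ k - rho g x i k * (\<Sum>l\<in>UNIV. g x $ j $ l * grad g f x l)
        + rho g x j k * (\<Sum>l\<in>UNIV. g x $ i $ l * grad g f x l) - (\<Sum>l\<in>UNIV. rho g x j l * grad g f x l) * g x $ i $ k)"
    unfolding Weyl_def by (simp add: sum.distrib sum_subtractf sum_distrib_left sum_distrib_right algebra_simps)
  then show ?thesis unfolding star[OF x] low[OF x] rhoN[OF x] .
qed

lemma WeylN: "x \<in> U \<Longrightarrow> beta x i * pd k f x - (\<Sum>j\<in>UNIV. beta x j * grad g f x j) * g x $ i $ k
   + (lam x - scal g x / 6) * pd i f x * pd k f x = 0"
proof -
  assume x: "x \<in> U"
  define N where "N = grad g f x"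
  have "0 = (\<Sum>j\<in>UNIV. (\<Sum>l\<in>UNIV. Weyl g x i j k l * N l) * N j)"
    using WN x unfolding N_def by (simp add: sum_distrib_left sum_distrib_right ac_simps)
  also have "\<dots> = beta x i * (\<Sum>j\<in>UNIV. g x $ j $ k * N j) - (\<Sum>j\<in>UNIV. beta x j * N j) * g x $ i $ k
     + mu * (Hes g f x i k * (\<Sum>j\<in>UNIV. pd j f x * N j) - pd i f x * (\<Sum>j\<in>UNIV. Hes g f x j k * N j))
     + scal g x / 6 * (g x $ i $ k * (\<Sum>j\<in>UNIV. pd j f x * N j) - pd i f x * (\<Sum>j\<in>UNIV. g x $ j $ k * N j))
     + 1/2 * (lam x * pd i f x * (\<Sum>j\<in>UNIV. g x $ j $ k * N j) - rho g x i k * (\<Sum>j\<in>UNIV. pd j f x * N j)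
        + (\<Sum>j\<in>UNIV. rho g x j k * N j) * pd i f x - lam x * (\<Sum>j\<in>UNIV. pd j f x * N j) * g x $ i $ k)"
    unfolding WeylN_inner[OF x, folded N_def]
    by (simp add: sum.distrib sum_subtractf sum_distrib_left sum_distrib_right algebra_simps)
  also have "\<dots> = beta x i * pd k f x - (\<Sum>j\<in>UNIV. beta x j * N j) * g x $ i $ k
   + (lam x - scal g x / 6) * pd i f x * pd k f x"
    unfolding N_def lowT[OF x] Qz[OF x] HNT[OF x] rhoNT[OF x] by (simp add: algebra_simps)
  finally show ?thesis unfolding N_def by simp
qed

end


lemma sum3_swap: "(\<Sum>a\<in>(UNIV::4 set). \<Sum>c\<in>(UNIV::4 set). \<Sum>d\<in>(UNIV::4 set). F a c d)
  = (\<Sum>d\<in>UNIV. \<Sum>a\<in>UNIV. \<Sum>c\<in>UNIV. (F a c d :: real))"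
proof -
  have "(\<Sum>a\<in>(UNIV::4 set). \<Sum>c\<in>(UNIV::4 set). \<Sum>d\<in>(UNIV::4 set). F a c d)
     = (\<Sum>a\<in>(UNIV::4 set). \<Sum>d\<in>(UNIV::4 set). \<Sum>c\<in>(UNIV::4 set). F a c d)"
    by (rule sum.cong[OF refl], rule sum.swap)
  also have "\<dots> = (\<Sum>d\<in>UNIV. \<Sum>a\<in>UNIV. \<Sum>c\<in>UNIV. F a c d)" by (rule sum.swap)
  finally show ?thesis .
qed

lemma sum_delta4r: "(\<Sum>q\<in>(UNIV::4 set). X q * (if k = q then 1 else 0)) = (X k :: real)"
  using sum_delta4[of k X] by (simp add: mult.commute)

context setting2 begin

lemma trace_lhs: "x \<in> U \<Longrightarrow> (\<Sum>a\<in>UNIV. \<Sum>c\<in>UNIV. ginv g x a c * (\<Sum>d\<in>UNIV. Rm g x a b c d * grad g f x d)) = lam x * pd b f x"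
proof -
  assume x: "x \<in> U"
  have "(\<Sum>a\<in>UNIV. \<Sum>c\<in>UNIV. ginv g x a c * (\<Sum>d\<in>UNIV. Rm g x a b c d * grad g f x d))
     = (\<Sum>a\<in>UNIV. \<Sum>c\<in>UNIV. \<Sum>d\<in>UNIV. ginv g x a c * Rm g x a b c d * grad g f x d)"
    by (simp add: sum_distrib_left mult.assoc)
  also have "\<dots> = (\<Sum>d\<in>UNIV. \<Sum>a\<in>UNIV. \<Sum>c\<in>UNIV. ginv g x a c * Rm g x a b c d * grad g f x d)"
    by (rule sum3_swap)
  also have "\<dots> = (\<Sum>d\<in>UNIV. (\<Sum>a\<in>UNIV. \<Sum>c\<in>UNIV. ginv g x a c * Rm g x a b c d) * grad g f x d)"
    by (simp add: sum_distrib_right)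
  also have "\<dots> = (\<Sum>d\<in>UNIV. rho g x b d * grad g f x d)" by (simp add: Rm_trace[OF x])
  also have "\<dots> = lam x * pd b f x" by (rule rhoN[OF x])
  finally show ?thesis .
qed

lemma hG1: "x \<in> U \<Longrightarrow> (\<Sum>c\<in>UNIV. ginv g x a c * g x $ b $ c) = (if b = a then 1 else 0)"
proof -
  assume x: "x \<in> U"
  have "(\<Sum>c\<in>UNIV. ginv g x a c * g x $ b $ c) = (\<Sum>c\<in>UNIV. g x $ b $ c * ginv g x c a)"
    by (simp add: hsym[OF x, of a] mult.commute)
  then show ?thesis by (simp add: gh[OF x])
qed

lemma trace_rhs: "x \<in> U \<Longrightarrow> (\<Sum>a\<in>UNIV. \<Sum>c\<in>UNIV. ginv g x a c * (beta x a * g x $ b $ c - beta x b * g x $ a $ c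
    + mu * (pd b f x * Hes g f x a c - pd a f x * Hes g f x b c))) = -3 * beta x b + mu * Lap g f x * pd b f x"
proof -
  assume x: "x \<in> U"
  have e1: "(\<Sum>a\<in>UNIV. \<Sum>c\<in>UNIV. ginv g x a c * (beta x a * g x $ b $ c)) = beta x b"
  proof -
    have "(\<Sum>a\<in>UNIV. \<Sum>c\<in>UNIV. ginv g x a c * (beta x a * g x $ b $ c)) = (\<Sum>a\<in>UNIV. beta x a * (\<Sum>c\<in>UNIV. ginv g x a c * g x $ b $ c))"
      by (simp add: sum_distrib_left ac_simps)
    then show ?thesis by (simp add: hG1[OF x] sum_delta4r)
  qed
  have e2: "(\<Sum>a\<in>UNIV. \<Sum>c\<in>UNIV. ginv g x a c * (beta x b * g x $ a $ c)) = 4 * beta x b"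
  proof -
    have "(\<Sum>a\<in>UNIV. \<Sum>c\<in>UNIV. ginv g x a c * (beta x b * g x $ a $ c)) = beta x b * (\<Sum>a\<in>UNIV. (\<Sum>c\<in>UNIV. ginv g x a c * g x $ a $ c))"
      by (simp add: sum_distrib_left ac_simps)
    then show ?thesis by (simp add: hG1[OF x])
  qed
  have e3: "(\<Sum>a\<in>UNIV. \<Sum>c\<in>UNIV. ginv g x a c * (pd b f x * Hes g f x a c)) = pd b f x * Lap g f x"
    unfolding Lap_def by (simp add: sum_distrib_left ac_simps)
  have e4: "(\<Sum>a\<in>UNIV. \<Sum>c\<in>UNIV. ginv g x a c * (pd a f x * Hes g f x b c)) = 0"
  proof -
    have "(\<Sum>a\<in>UNIV. \<Sum>c\<in>UNIV. ginv g x a c * (pd a f x * Hes g f x b c)) = (\<Sum>c\<in>UNIV. \<Sum>a\<in>UNIV. ginv g x a c * (pd a f x * Hes g f x b c))"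
      by (rule sum.swap)
    also have "\<dots> = (\<Sum>c\<in>UNIV. (\<Sum>a\<in>UNIV. ginv g x a c * pd a f x) * Hes g f x b c)"
      by (simp add: sum_distrib_left sum_distrib_right ac_simps)
    also have "\<dots> = (\<Sum>c\<in>UNIV. Hes g f x b c * grad g f x c)"
      by (simp only: gradT[OF x]) (simp add: mult.commute)
    also have "\<dots> = 0" by (rule HN[OF iso x])
    finally show ?thesis .
  qed
  have "(\<Sum>a\<in>UNIV. \<Sum>c\<in>UNIV. ginv g x a c * (beta x a * g x $ b $ c - beta x b * g x $ a $ c
    + mu * (pd b f x * Hes g f x a c - pd a f x * Hes g f x b c)))
    = (\<Sum>a\<in>UNIV. \<Sum>c\<in>UNIV. ginv g x a c * (beta x a * g x $ b $ c))
      - (\<Sum>a\<in>UNIV. \<Sum>c\<in>UNIV. ginv g x a c * (beta x b * g x $ a $ c))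
      + mu * ((\<Sum>a\<in>UNIV. \<Sum>c\<in>UNIV. ginv g x a c * (pd b f x * Hes g f x a c))
        - (\<Sum>a\<in>UNIV. \<Sum>c\<in>UNIV. ginv g x a c * (pd a f x * Hes g f x b c)))"
    by (simp add: sum.distrib sum_subtractf sum_distrib_left algebra_simps)
  then show ?thesis unfolding e1 e2 e3 e4 by simp
qed

lemma qe_trace: "x \<in> U \<Longrightarrow> Lap g f x + scal g x = 4 * lam x"
proof -
  assume x: "x \<in> U"
  have "(\<Sum>a\<in>UNIV. \<Sum>b\<in>UNIV. ginv g x a b * (Hes g f x a b + rho g x a b - mu * pd a f x * pd b f x))
      = (\<Sum>a\<in>UNIV. \<Sum>b\<in>UNIV. ginv g x a b * (lam x * g x $ a $ b))"
    by (simp add: qe_eq[OF x])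
  moreover have "(\<Sum>a\<in>UNIV. \<Sum>b\<in>UNIV. ginv g x a b * (lam x * g x $ a $ b)) = 4 * lam x"
  proof -
    have "(\<Sum>a\<in>UNIV. \<Sum>b\<in>UNIV. ginv g x a b * (lam x * g x $ a $ b)) = lam x * (\<Sum>a\<in>UNIV. \<Sum>b\<in>UNIV. ginv g x a b * g x $ a $ b)"
      by (simp add: sum_distrib_left ac_simps)
    then show ?thesis by (simp add: hG1[OF x])
  qed
  moreover have "(\<Sum>a\<in>UNIV. \<Sum>b\<in>UNIV. ginv g x a b * (Hes g f x a b + rho g x a b - mu * pd a f x * pd b f x))
     = Lap g f x + scal g x - mu * (\<Sum>a\<in>UNIV. \<Sum>b\<in>UNIV. ginv g x a b * pd a f x * pd b f x)"
    unfolding Lap_def scal_def by (simp add: sum.distrib sum_subtractf sum_distrib_left algebra_simps)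
  moreover have "(\<Sum>a\<in>UNIV. \<Sum>b\<in>UNIV. ginv g x a b * pd a f x * pd b f x) = 0"
    using gval_grad[OF x] iso x unfolding isotropic_on_def by simp
  ultimately show ?thesis by simp
qed

end


context setting2 begin

lemma f_nz: "x \<in> U \<Longrightarrow> \<exists>i0. pd i0 f x \<noteq> 0"
proof (rule ccontr)
  assume x: "x \<in> U" and "\<not> (\<exists>i0. pd i0 f x \<noteq> 0)"
  then have z: "\<And>j. pd j f x = 0" by blast
  have "grad g f x i = 0" for i unfolding grad_def z by simp
  then show False using iso x unfolding isotropic_on_def by blast
qed

lemma betaN: "x \<in> U \<Longrightarrow> (\<Sum>j\<in>UNIV. beta x j * grad g f x j) = 0"
proof -
  assume x: "x \<in> U"
  obtain i0 where i0: "pd i0 f x \<noteq> 0" using f_nz[OF x] by blast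
  define bN where "bN = (\<Sum>j\<in>UNIV. beta x j * grad g f x j)"
  define c where "c = lam x - scal g x / 6"
  have w: "beta x i0 * pd k f x - bN * g x $ i0 $ k + c * pd i0 f x * pd k f x = 0" for k
    using WeylN[OF x, of i0 k] unfolding bN_def c_def .
  have "0 = (\<Sum>k\<in>UNIV. (beta x i0 * pd k f x - bN * g x $ i0 $ k + c * pd i0 f x * pd k f x) * grad g f x k)"
    unfolding w by simp
  also have "\<dots> = beta x i0 * (\<Sum>k\<in>UNIV. pd k f x * grad g f x k) - bN * (\<Sum>k\<in>UNIV. g x $ i0 $ k * grad g f x k)
      + c * pd i0 f x * (\<Sum>k\<in>UNIV. pd k f x * grad g f x k)"
    by (simp add: sum.distrib sum_subtractf sum_distrib_left algebra_simps)
  also have "\<dots> = - bN * pd i0 f x" unfolding Qz[OF x] low[OF x] by simp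
  finally have "bN * pd i0 f x = 0" by simp
  then show ?thesis using i0 unfolding bN_def by simp
qed

lemma beta_f: "x \<in> U \<Longrightarrow> beta x i = (scal g x / 6 - lam x) * pd i f x"
proof -
  assume x: "x \<in> U"
  obtain i0 where i0: "pd i0 f x \<noteq> 0" using f_nz[OF x] by blast
  have "beta x i * pd i0 f x + (lam x - scal g x / 6) * pd i f x * pd i0 f x = 0"
    using WeylN[OF x, of i i0] betaN[OF x] by simp
  then have "(beta x i - (scal g x / 6 - lam x) * pd i f x) * pd i0 f x = 0"
    by (simp add: algebra_simps)
  then show ?thesis using i0 by simp
qed

lemma trace_eq: "x \<in> U \<Longrightarrow> lam x * pd b f x = -3 * beta x b + mu * Lap g f x * pd b f x"
  using trace_lhs[of x b] trace_rhs[of x b] star[of x] by simp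

lemma main_pt: "x \<in> U \<Longrightarrow> scal g x = 4 * lam x \<and> Lap g f x = 0"
proof -
  assume x: "x \<in> U"
  obtain i0 where i0: "pd i0 f x \<noteq> 0" using f_nz[OF x] by blast
  have "lam x * pd i0 f x = -3 * ((scal g x / 6 - lam x) * pd i0 f x) + mu * Lap g f x * pd i0 f x"
    using trace_eq[OF x, of i0] beta_f[OF x, of i0] by simp
  then have "(lam x - (-3 * (scal g x / 6 - lam x) + mu * Lap g f x)) * pd i0 f x = 0"
    by (simp add: algebra_simps)
  then have e: "lam x = -3 * (scal g x / 6 - lam x) + mu * Lap g f x" using i0 by simp
  have L: "Lap g f x = 4 * lam x - scal g x" using qe_trace[OF x] by simp
  have "(1/2 + mu) * (4 * lam x - scal g x) = 0" using e unfolding L by (simp add: algebra_simps)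
  moreover have "1/2 + mu \<noteq> 0" using mu by simp
  ultimately have "4 * lam x - scal g x = 0" by simp
  then show ?thesis using L by simp
qed

lemma ric_pt: "x \<in> U \<Longrightarrow> RicOp g x (grad g f x) i = lam x * grad g f x i"
proof -
  assume x: "x \<in> U"
  have "(\<Sum>k\<in>UNIV. grad g f x k * rho g x k j) = lam x * pd j f x" for j
    using rhoNT[OF x, of j] by (simp add: mult.commute)
  then show ?thesis unfolding RicOp_def grad_def by (simp add: sum_distrib_left ac_simps)
qed

lemma grad_lam_pt: "x \<in> U \<Longrightarrow> grad g lam x i = - lam x * grad g f x i"
proof -
  assume x: "x \<in> U"
  have ds: "pd j (scal g) x = 4 * pd j lam x" for j
  proof -
    have "pd j (scal g) x = pd j (\<lambda>y. 4 * lam y) x"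
      by (rule pd_local[OF opn x]) (use main_pt in blast)
    also have "\<dots> = 4 * pd j lam x" by (rule pd_cmult[OF LDlam[OF x]])
    finally show ?thesis .
  qed
  have "pd j lam x = - lam x * pd j f x" for j
    using beta_f[OF x, of j] main_pt[OF x] ds[of j] unfolding beta_def by (simp add: field_simps)
  then show ?thesis unfolding grad_def by (simp add: sum_distrib_left ac_simps)
qed

end

theorem lemma2p5:
  fixes U :: "(real^4) set" and g :: "real^4 \<Rightarrow> real^4^4"
    and f lam :: "real^4 \<Rightarrow> real" and \<mu> :: real
  assumes "lorentzian_metric_on U g"
    and "quasi_einstein_on U g f \<mu> lam"
    and "isotropic_on U g f"
    and "\<mu> \<noteq> - 1/2"
    and "\<forall>x\<in>U. \<forall>i j k. divW g x i j k = 0"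
    and "\<forall>x\<in>U. \<forall>i k. (\<Sum>j\<in>UNIV. \<Sum>l\<in>UNIV. Weyl g x i j k l * grad g f x j * grad g f x l) = 0"
  shows "\<forall>x\<in>U. (\<forall>i. RicOp g x (grad g f x) i = lam x * grad g f x i)
              \<and> scal g x = 4 * lam x
              \<and> Lap g f x = 0
              \<and> (\<forall>i. grad g lam x i = - lam x * grad g f x i)"
proof -
  interpret setting2 U g f \<mu> lam
    by (intro setting2.intro setting.intro setting2_axioms.intro assms)
  show ?thesis using main_pt ric_pt grad_lam_pt by blast
qed

end
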